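(* Let $I$ be a left ideal of a $*$-algebra $\mathcal A$. The following are equivalent: (1) $I$ is real and $\dim(\mathcal A/I)<\infty$; (2) there exist a finite-dimensional $*$-representation $\pi$ and $v\in V_\pi$ such that $I=\mathcal I_{\mathrm{left}}(\pi,v)$ and $\pi(\mathcal A)v=V_\pi$. Moreover, for any class $\mathcal C$ of $*$-representations: if $\pi\in\mathcal C$ and $v\in V_\pi$ satisfy $\pi(\mathcal A)v=V_\pi$, and $J\subseteq\mathcal I_{\mathrm{left}}(\pi,v)$ is a two-sided ideal, then $J\subseteq\ker\pi$. In particular, if $\mathcal I_{\mathrm{left}}(\pi,v)$ is a two-sided ideal, then $\ker\pi=\mathcal I_{\mathrm{left}}(\pi,v)$.
   Context: $\mathbb F\in\{\mathbb R,\mathbb C\}$. A $*$-algebra is a unital associative $\mathbb F$-algebra with involution. A left ideal $I$ is real if whenever $a_1,\dots,a_n\in\mathcal A$ and $\sum_j a_j^*a_j\in I+I^*$, every $a_j\in I$. A $*$-representation $\pi$ is a unital $*$-homomorphism from $\mathcal A$ into the $*$-algebra of adjointable linear operators on a pre-Hilbert space $V_\pi$ over $\mathbb F$; it is finite-dimensional if $\dim V_\pi<\infty$. For $\pi$ and $v\in V_\pi$, $\mathcal I_{\mathrm{left}}(\pi,v)=\{a\in\mathcal A:\pi(a)v=0\}$. *)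

theory Defs
  imports Complex_Main
begin

text \<open>Scalars: the field F is modelled as a subset K of the complex numbers,
  either the reals or all of the complex numbers. Conjugation is cnj.\<close>

definition scalar_field :: "complex set \<Rightarrow> bool" where
  "scalar_field K \<longleftrightarrow> K = \<real> \<or> K = UNIV"

definition star_algebra :: "complex set \<Rightarrow> (complex \<Rightarrow> 'a::ring_1 \<Rightarrow> 'a) \<Rightarrow> ('a \<Rightarrow> 'a) \<Rightarrow> bool" where
  "star_algebra K sm st \<longleftrightarrow> scalar_field K \<and>
     (\<forall>c\<in>K. \<forall>a b. sm c (a + b) = sm c a + sm c b) \<and>
     (\<forall>c\<in>K. \<forall>d\<in>K. \<forall>a. sm (c + d) a = sm c a + sm d a) \<and>
     (\<forall>c\<in>K. \<forall>d\<in>K. \<forall>a. sm (c * d) a = sm c (sm d a)) \<and>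
     (\<forall>a. sm 1 a = a) \<and>
     (\<forall>c\<in>K. \<forall>a b. sm c (a * b) = sm c a * b \<and> sm c (a * b) = a * sm c b) \<and>
     (\<forall>a b. st (a + b) = st a + st b) \<and>
     (\<forall>c\<in>K. \<forall>a. st (sm c a) = sm (cnj c) (st a)) \<and>
     (\<forall>a b. st (a * b) = st b * st a) \<and>
     (\<forall>a. st (st a) = a)"

definition left_ideal :: "complex set \<Rightarrow> (complex \<Rightarrow> 'a::ring_1 \<Rightarrow> 'a) \<Rightarrow> 'a set \<Rightarrow> bool" where
  "left_ideal K sm I \<longleftrightarrow> 0 \<in> I \<and> (\<forall>x\<in>I. \<forall>y\<in>I. x + y \<in> I) \<and> (\<forall>x\<in>I. - x \<in> I) \<and>
     (\<forall>c\<in>K. \<forall>x\<in>I. sm c x \<in> I) \<and> (\<forall>a. \<forall>x\<in>I. a * x \<in> I)"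

definition two_sided_ideal :: "complex set \<Rightarrow> (complex \<Rightarrow> 'a::ring_1 \<Rightarrow> 'a) \<Rightarrow> 'a set \<Rightarrow> bool" where
  "two_sided_ideal K sm J \<longleftrightarrow> left_ideal K sm J \<and> (\<forall>a. \<forall>x\<in>J. x * a \<in> J)"

definition real_ideal :: "('a::ring_1 \<Rightarrow> 'a) \<Rightarrow> 'a set \<Rightarrow> bool" where
  "real_ideal st I \<longleftrightarrow>
     (\<forall>(n::nat) (a::nat \<Rightarrow> 'a). (\<Sum>j<n. st (a j) * a j) \<in> {x + st y | x y. x \<in> I \<and> y \<in> I}
        \<longrightarrow> (\<forall>j<n. a j \<in> I))"

definition finite_codim :: "complex set \<Rightarrow> (complex \<Rightarrow> 'a::ring_1 \<Rightarrow> 'a) \<Rightarrow> 'a set \<Rightarrow> bool" where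
  "finite_codim K sm I \<longleftrightarrow>
     (\<exists>S. finite S \<and> (\<forall>a. \<exists>c. (\<forall>s\<in>S. c s \<in> K) \<and> a - (\<Sum>s\<in>S. sm (c s) s) \<in> I))"

definition pre_hilbert :: "complex set \<Rightarrow> 'v::ab_group_add set \<Rightarrow> (complex \<Rightarrow> 'v \<Rightarrow> 'v) \<Rightarrow> ('v \<Rightarrow> 'v \<Rightarrow> complex) \<Rightarrow> bool" where
  "pre_hilbert K V vsm ip \<longleftrightarrow>
     0 \<in> V \<and> (\<forall>x\<in>V. \<forall>y\<in>V. x + y \<in> V) \<and> (\<forall>x\<in>V. - x \<in> V) \<and>
     (\<forall>c\<in>K. \<forall>x\<in>V. vsm c x \<in> V) \<and>
     (\<forall>c\<in>K. \<forall>x\<in>V. \<forall>y\<in>V. vsm c (x + y) = vsm c x + vsm c y) \<and>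
     (\<forall>c\<in>K. \<forall>d\<in>K. \<forall>x\<in>V. vsm (c + d) x = vsm c x + vsm d x) \<and>
     (\<forall>c\<in>K. \<forall>d\<in>K. \<forall>x\<in>V. vsm (c * d) x = vsm c (vsm d x)) \<and>
     (\<forall>x\<in>V. vsm 1 x = x) \<and>
     (\<forall>x\<in>V. \<forall>y\<in>V. ip x y \<in> K) \<and>
     (\<forall>x\<in>V. \<forall>y\<in>V. \<forall>z\<in>V. ip (x + y) z = ip x z + ip y z) \<and>
     (\<forall>c\<in>K. \<forall>x\<in>V. \<forall>y\<in>V. ip (vsm c x) y = c * ip x y) \<and>
     (\<forall>x\<in>V. \<forall>y\<in>V. ip y x = cnj (ip x y)) \<and>
     (\<forall>x\<in>V. Im (ip x x) = 0 \<and> Re (ip x x) \<ge> 0) \<and>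
     (\<forall>x\<in>V. ip x x = 0 \<longrightarrow> x = 0)"

definition fin_dim :: "complex set \<Rightarrow> 'v::ab_group_add set \<Rightarrow> (complex \<Rightarrow> 'v \<Rightarrow> 'v) \<Rightarrow> bool" where
  "fin_dim K V vsm \<longleftrightarrow>
     (\<exists>S. finite S \<and> S \<subseteq> V \<and> (\<forall>x\<in>V. \<exists>c. (\<forall>s\<in>S. c s \<in> K) \<and> x = (\<Sum>s\<in>S. vsm (c s) s)))"

definition star_rep :: "complex set \<Rightarrow> (complex \<Rightarrow> 'a::ring_1 \<Rightarrow> 'a) \<Rightarrow> ('a \<Rightarrow> 'a) \<Rightarrow>
    'v::ab_group_add set \<Rightarrow> (complex \<Rightarrow> 'v \<Rightarrow> 'v) \<Rightarrow> ('v \<Rightarrow> 'v \<Rightarrow> complex) \<Rightarrow> ('a \<Rightarrow> 'v \<Rightarrow> 'v) \<Rightarrow> bool" where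
  "star_rep K sm st V vsm ip p \<longleftrightarrow> pre_hilbert K V vsm ip \<and>
     (\<forall>a. \<forall>x\<in>V. p a x \<in> V) \<and>
     (\<forall>a. \<forall>x\<in>V. \<forall>y\<in>V. p a (x + y) = p a x + p a y) \<and>
     (\<forall>a. \<forall>c\<in>K. \<forall>x\<in>V. p a (vsm c x) = vsm c (p a x)) \<and>
     (\<forall>x\<in>V. p 1 x = x) \<and>
     (\<forall>a b. \<forall>x\<in>V. p (a + b) x = p a x + p b x) \<and>
     (\<forall>a. \<forall>c\<in>K. \<forall>x\<in>V. p (sm c a) x = vsm c (p a x)) \<and>
     (\<forall>a b. \<forall>x\<in>V. p (a * b) x = p a (p b x)) \<and>
     (\<forall>a. \<forall>x\<in>V. \<forall>y\<in>V. ip (p a x) y = ip x (p (st a) y))"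

definition I_left :: "('a \<Rightarrow> 'v \<Rightarrow> 'v::zero) \<Rightarrow> 'v \<Rightarrow> 'a set" where
  "I_left p v = {a. p a v = 0}"

definition ker_rep :: "'v::zero set \<Rightarrow> ('a \<Rightarrow> 'v \<Rightarrow> 'v) \<Rightarrow> 'a set" where
  "ker_rep V p = {a. \<forall>x\<in>V. p a x = 0}"

end

theory Submission
  imports Defs "HOL-Analysis.Analysis"
begin

definition qf :: "'i set \<Rightarrow> ('i \<Rightarrow> 'i \<Rightarrow> real) \<Rightarrow> ('i \<Rightarrow> real) \<Rightarrow> real" where
  "qf D X x = (\<Sum>k\<in>D. \<Sum>l\<in>D. x k * X k l * x l)"
definition psd :: "'i set \<Rightarrow> ('i \<Rightarrow> 'i \<Rightarrow> real) \<Rightarrow> bool" where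
  "psd D X \<longleftrightarrow> (\<forall>x. qf D X x \<ge> 0)"
definition symD :: "'i set \<Rightarrow> ('i \<Rightarrow> 'i \<Rightarrow> real) \<Rightarrow> bool" where
  "symD D X \<longleftrightarrow> (\<forall>k\<in>D. \<forall>l\<in>D. X k l = X l k)"

lemma sum_delta_l: "finite D \<Longrightarrow> a \<in> D \<Longrightarrow> (\<Sum>k\<in>D. (if k = a then t else 0) * f k) = t * (f a::real)"
proof -
  assume "finite D" "a \<in> D"
  have "(\<Sum>k\<in>D. (if k = a then t else 0) * f k) = (\<Sum>k\<in>D. if k = a then t * f a else 0)"
    by (rule sum.cong) auto
  thus ?thesis using \<open>finite D\<close> \<open>a \<in> D\<close> by simp
qed

lemma sum_delta_r: "finite D \<Longrightarrow> a \<in> D \<Longrightarrow> (\<Sum>k\<in>D. f k * (if k = a then t else 0)) = f a * (t::real)"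
  using sum_delta_l[of D a t f] by (simp add: mult.commute)

lemma qf_shift:
  assumes "finite D" "a \<in> D"
  shows "qf D X (x(a:= x a + t)) = qf D X x + t * (\<Sum>l\<in>D. X a l * x l) + t * (\<Sum>k\<in>D. x k * X k a) + t\<^sup>2 * X a a"
proof -
  define d where "d = (\<lambda>k. if k = a then t else (0::real))"
  have e: "x(a:= x a + t) = (\<lambda>k. x k + d k)" by (auto simp: d_def)
  have "qf D X (\<lambda>k. x k + d k) = (\<Sum>k\<in>D. \<Sum>l\<in>D. x k * X k l * x l + d k * (X k l * x l) + x k * X k l * d l + d k * (X k l * d l))"
    unfolding qf_def by (simp add: algebra_simps)
  also have "\<dots> = qf D X x + (\<Sum>k\<in>D. d k * (\<Sum>l\<in>D. X k l * x l)) + (\<Sum>k\<in>D. x k * (\<Sum>l\<in>D.  X k l * d l)) + (\<Sum>k\<in>D. d k * (\<Sum>l\<in>D. X k l * d l))"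
    unfolding qf_def by (simp add: sum.distrib sum_distrib_left mult.assoc)
  also have "\<dots> = qf D X x + t * (\<Sum>l\<in>D. X a l * x l) + t * (\<Sum>k\<in>D. x k * X k a) + t\<^sup>2 * X a a"
  proof -
    have i: "\<And>k. (\<Sum>l\<in>D. X k l * d l) = X k a * t" using assms unfolding d_def by (simp add: sum_delta_r)
    have j: "\<And>g. (\<Sum>k\<in>D. d k * g k) = t * g a" using assms unfolding d_def by (simp add: sum_delta_l)
    show ?thesis unfolding i j by (simp add: sum_distrib_left sum_distrib_right power2_eq_square algebra_simps)
  qed
  finally show ?thesis unfolding e .
qed

lemma qf_ind: "finite D \<Longrightarrow> l \<in> D \<Longrightarrow> qf D X (\<lambda>k. if k = l then 1 else 0) = X l l"
  unfolding qf_def by (simp add: sum_delta_l sum_delta_r)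

lemma psd_diag: "finite D \<Longrightarrow> psd D X \<Longrightarrow> l \<in> D \<Longrightarrow> X l l \<ge> 0"
  using qf_ind unfolding psd_def by metis

lemma psd_zero_diag:
  assumes "finite D" "psd D X" "symD D X" "a \<in> D" "l \<in> D" "X a a = 0"
  shows "X a l = 0"
proof (cases "a = l")
  case True thus ?thesis using assms by simp
next
  case False
  define x where "x = (\<lambda>k. if k = l then 1 else (0::real))"
  have xa: "x a = 0" using False by (simp add: x_def)
  have s1: "(\<Sum>l'\<in>D. X a l' * x l') = X a l" using assms(1,5) by (simp add: x_def sum_delta_r)
  have s2: "(\<Sum>k\<in>D. x k * X k a) = X a l" using assms(1,5,3,4) by (simp add: x_def sum_delta_l symD_def)
  have q: "\<And>t. qf D X (x(a:= x a + t)) = X l l + 2 * t * X a l"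
    using qf_shift[OF assms(1,4), of X x] s1 s2 qf_ind[OF assms(1,5), of X] assms(6) by (simp add: x_def[symmetric])
  have ge: "\<And>t. X l l + 2 * t * X a l \<ge> 0" using assms(2) q unfolding psd_def by metis
  show ?thesis
  proof (rule ccontr)
    assume ne: "X a l \<noteq> 0"
    have "X l l + 2 * (-(X l l + 1) / (2 * X a l)) * X a l \<ge> 0" by (rule ge)
    moreover have "2 * (-(X l l + 1) / (2 * X a l)) * X a l = -(X l l + 1)" using ne by (simp add: field_simps)
    ultimately show False by simp
  qed
qed

lemma psd_restrict:
  assumes "finite D" "a \<notin> D" "psd (insert a D) X" shows "psd D X"
  unfolding psd_def
proof
  fix x
  have "qf (insert a D) X (x(a:=0)) = qf D X x"
    unfolding qf_def using assms(1,2)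
    by (auto intro!: sum.cong simp: sum.insert)
  thus "qf D X x \<ge> 0" using assms(3) unfolding psd_def by metis
qed

lemma qf_insert_sym:
  assumes "finite D" "symD D X" "a \<in> D"
  shows "(\<Sum>k\<in>D. x k * X k a) = (\<Sum>l\<in>D. X a l * x l)"
  using assms unfolding symD_def by (auto intro!: sum.cong simp: mult.commute)

lemma psd_schur:
  assumes "finite D" "psd D X" "symD D X" "a \<in> D" "X a a > 0"
  shows "psd D (\<lambda>k l. X k l - X k a * X a l / X a a)"
  unfolding psd_def
proof
  fix x
  define s where "s = (\<Sum>l\<in>D. X a l * x l)"
  have s2: "(\<Sum>k\<in>D. x k * X k a) = s" unfolding s_def by (rule qf_insert_sym[OF assms(1,3,4)])
  have "qf D (\<lambda>k l. X k l - X k a * X a l / X a a) x = qf D X x - (\<Sum>k\<in>D. x k * X k a) * (\<Sum>l\<in>D. X a l * x l) / X a a"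
  proof -
    have p: "(\<Sum>k\<in>D. x k * X k a) * (\<Sum>l\<in>D. X a l * x l) / X a a = (\<Sum>k\<in>D. \<Sum>l\<in>D. x k * (X k a * X a l / X a a) * x l)"
      by (simp add: sum_product sum_divide_distrib algebra_simps)
    have q: "\<And>k l. x k * (X k l - X k a * X a l / X a a) * x l = x k * X k l * x l - x k * (X k a * X a l / X a a) * x l"
      by (simp add: algebra_simps)
    show ?thesis unfolding qf_def p q by (simp add: sum_subtractf)
  qed
  also have "\<dots> = qf D X x - s\<^sup>2 / X a a" using s2 unfolding s_def by (simp add: power2_eq_square)
  also have "\<dots> = qf D X (x(a:= x a + (- s / X a a)))"
  proof -
    have "qf D X (x(a:= x a + (- s / X a a))) = qf D X x + (- s / X a a) * s + (- s / X a a) * s + (- s / X a a)\<^sup>2 * X a a"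
      using qf_shift[OF assms(1,4), of X x "- s / X a a"] s2 unfolding s_def[symmetric] by simp
    also have "\<dots> = qf D X x - s\<^sup>2 / X a a" using assms(5) by (simp add: power2_eq_square field_simps)
    finally show ?thesis by simp
  qed
  also have "\<dots> \<ge> 0" using assms(2) unfolding psd_def by blast
  finally show "qf D (\<lambda>k l. X k l - X k a * X a l / X a a) x \<ge> 0" .
qed

lemma psd_decomp:
  assumes "finite D" "psd D X" "symD D X"
  shows "\<exists>(n::nat) cs. \<forall>k\<in>D. \<forall>l\<in>D. X k l = (\<Sum>j<n. cs j k * cs j l)"
  using assms
proof (induction D arbitrary: X rule: finite_induct)
  case empty thus ?case by auto
next
  case (insert a D)
  let ?D = "insert a D"
  have fin: "finite ?D" using insert by simp
  have aD: "a \<in> ?D" by simp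
  have Xaa: "X a a \<ge> 0" using psd_diag[OF fin insert.prems(1) aD] .
  show ?case
  proof (cases "X a a = 0")
    case True
    have z: "\<And>l. l \<in> ?D \<Longrightarrow> X a l = 0" using psd_zero_diag[OF fin insert.prems(1,2) aD _ True] by blast
    have z2: "\<And>l. l \<in> ?D \<Longrightarrow> X l a = 0"
    proof -
      fix l assume l: "l \<in> ?D"
      have "X l a = X a l" using insert.prems(2) l aD unfolding symD_def by blast
      thus "X l a = 0" using z[OF l] by simp
    qed
    have "psd D X" by (rule psd_restrict[OF insert.hyps(1,2) insert.prems(1)])
    moreover have "symD D X" using insert.prems(2) unfolding symD_def by auto
    ultimately have "\<exists>(n::nat) cs. \<forall>k\<in>D. \<forall>l\<in>D. X k l = (\<Sum>j<n. cs j k * cs j l)"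
      by (rule insert.IH)
    then obtain n :: nat and cs where cs: "\<forall>k\<in>D. \<forall>l\<in>D. X k l = (\<Sum>j<n. cs j k * cs j l)" by blast
    define cs' where "cs' = (\<lambda>j. (cs j)(a := 0))"
    have "\<forall>k\<in>?D. \<forall>l\<in>?D. X k l = (\<Sum>j<n. cs' j k * cs' j l)"
    proof (intro ballI)
      fix k l assume k: "k \<in> ?D" and l: "l \<in> ?D"
      show "X k l = (\<Sum>j<n. cs' j k * cs' j l)"
      proof (cases "k = a \<or> l = a")
        case True
        have "X k l = 0" using True z z2 k l by blast
        moreover have "(\<Sum>j<n. cs' j k * cs' j l) = 0" using True by (elim disjE) (simp_all add: cs'_def)
        ultimately show ?thesis by simp
      next
        case False
        hence "k \<in> D" "l \<in> D" using k l by auto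
        hence "X k l = (\<Sum>j<n. cs j k * cs j l)" using cs by blast
        thus ?thesis using False by (simp add: cs'_def)
      qed
    qed
    thus ?thesis by blast
  next
    case False
    hence pos: "X a a > 0" using Xaa by simp
    define Y where "Y = (\<lambda>k l. X k l - X k a * X a l / X a a)"
    have "psd ?D Y" unfolding Y_def by (rule psd_schur[OF fin insert.prems(1,2) aD pos])
    hence "psd D Y" by (rule psd_restrict[OF insert.hyps(1,2)])
    moreover have "symD D Y" unfolding symD_def
    proof (intro ballI)
      fix k l assume k: "k \<in> D" and l: "l \<in> D"
      have e1: "X k l = X l k" and e2: "X a l = X l a" and e3: "X k a = X a k" using insert.prems(2) k l unfolding symD_def by blast+
      have "X k a * X a l = X l a * X a k" unfolding e2 e3 by (rule mult.commute)
      thus "Y k l = Y l k" unfolding Y_def e1 by simp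
    qed
    ultimately have "\<exists>(n::nat) cs. \<forall>k\<in>D. \<forall>l\<in>D. Y k l = (\<Sum>j<n. cs j k * cs j l)"
      by (rule insert.IH)
    then obtain n :: nat and cs where cs: "\<forall>k\<in>D. \<forall>l\<in>D. Y k l = (\<Sum>j<n. cs j k * cs j l)" by blast
    define v where "v = (\<lambda>k. X k a / sqrt (X a a))"
    define cs' where "cs' = (\<lambda>j. if j < n then (cs j)(a := 0) else v)"
    have sq: "sqrt (X a a) * sqrt (X a a) = X a a" using Xaa by simp
    have sym: "\<And>k l. k \<in> ?D \<Longrightarrow> l \<in> ?D \<Longrightarrow> X k l = X l k" using insert.prems(2) unfolding symD_def by blast
    have "\<forall>k\<in>?D. \<forall>l\<in>?D. X k l = (\<Sum>j<Suc n. cs' j k * cs' j l)"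
    proof (intro ballI)
      fix k l assume k: "k \<in> ?D" and l: "l \<in> ?D"
      have vv: "v k * v l = X k a * X a l / X a a"
      proof -
        have "v k * v l = X k a * X l a / (sqrt (X a a) * sqrt (X a a))" unfolding v_def by simp
        also have "\<dots> = X k a * X l a / X a a" using sq by simp
        finally show ?thesis using sym[OF l aD] by simp
      qed
      have e0: "(\<Sum>j<Suc n. cs' j k * cs' j l) = (\<Sum>j<n. cs' j k * cs' j l) + cs' n k * cs' n l"
        by (rule sum.lessThan_Suc)
      have e1: "(\<Sum>j<n. cs' j k * cs' j l) = (\<Sum>j<n. ((cs j)(a:=0)) k * ((cs j)(a:=0)) l)"
        by (rule sum.cong) (auto simp: cs'_def)
      have e2: "cs' n k * cs' n l = v k * v l" by (simp add: cs'_def)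
      have e3: "(\<Sum>j<n. ((cs j)(a:=0)) k * ((cs j)(a:=0)) l) + v k * v l = X k l"
      proof (cases "k = a \<or> l = a")
        case True
        have z0: "(\<Sum>j<n. ((cs j)(a:=0)) k * ((cs j)(a:=0)) l) = 0" using True by (elim disjE) simp_all
        have "X k a * X a l / X a a = X k l"
        proof (cases "k = a")
          case True thus ?thesis using pos by simp
        next
          case False hence "l = a" using \<open>k = a \<or> l = a\<close> by simp
          thus ?thesis using pos sym[OF k aD] by simp
        qed
        thus ?thesis using vv z0 by simp
      next
        case False
        hence "k \<in> D" "l \<in> D" using k l by auto
        hence "Y k l = (\<Sum>j<n. cs j k * cs j l)" using cs by blast
        hence "(\<Sum>j<n. ((cs j)(a:=0)) k * ((cs j)(a:=0)) l) = Y k l" using False by simp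
        thus ?thesis using vv unfolding Y_def by simp
      qed
      show "X k l = (\<Sum>j<Suc n. cs' j k * cs' j l)" using e0 e1 e2 e3 by simp
    qed
    thus ?thesis by blast
  qed
qed


definition qm :: "'i set \<Rightarrow> ('i \<Rightarrow> 'i \<Rightarrow> 'j \<Rightarrow> real) \<Rightarrow> ('i \<Rightarrow> real) \<Rightarrow> 'j \<Rightarrow> real" where
  "qm D \<beta> c e = (\<Sum>k\<in>D. \<Sum>l\<in>D. c k * c l * \<beta> k l e)"
definition Lam :: "'i set \<Rightarrow> ('i \<Rightarrow> 'i \<Rightarrow> 'j \<Rightarrow> real) \<Rightarrow> ('i \<Rightarrow> 'i \<Rightarrow> real) \<Rightarrow> 'j \<Rightarrow> real" where
  "Lam D \<beta> X e = (\<Sum>k\<in>D. \<Sum>l\<in>D. X k l * \<beta> k l e)"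

lemma small_t:
  fixes a b :: real
  assumes "b \<ge> 0" "\<And>t. 0 < t \<Longrightarrow> t \<le> 1 \<Longrightarrow> 0 \<le> 2 * a + t * b"
  shows "0 \<le> a"
proof (rule ccontr)
  assume "\<not> 0 \<le> a" hence a: "a < 0" by simp
  define t where "t = min 1 (- a / (b + 1))"
  have "a / (b + 1) < 0" using a assms(1) by (simp add: divide_neg_pos)
  hence t0: "0 < t" by (simp add: t_def)
  have t1: "t \<le> 1" by (simp add: t_def)
  have "t * b \<le> (- a / (b + 1)) * b" using assms(1) by (intro mult_right_mono) (auto simp: t_def)
  also have "\<dots> < - a" using a assms(1) by (simp add: field_simps)
  finally have "2 * a + t * b < 0" using a by simp
  thus False using assms(2)[OF t0 t1] by simp
qed

lemma psd_bound:
  assumes "finite D" "psd D X" "symD D X" "(\<Sum>k\<in>D. X k k) = 1" "k \<in> D" "l \<in> D"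
  shows "\<bar>X k l\<bar> \<le> 1"
proof -
  have diag: "\<And>k. k \<in> D \<Longrightarrow> 0 \<le> X k k \<and> X k k \<le> 1"
  proof -
    fix k assume k: "k \<in> D"
    have nn: "\<And>m. m \<in> D \<Longrightarrow> 0 \<le> X m m" using psd_diag[OF assms(1,2)] by blast
    have "X k k \<le> (\<Sum>m\<in>D. X m m)" by (rule member_le_sum[OF k]) (use nn assms(1) in auto)
    thus "0 \<le> X k k \<and> X k k \<le> 1" using nn[OF k] assms(4) by simp
  qed
  show ?thesis
  proof (cases "k = l")
    case True thus ?thesis using diag[OF assms(5)] by simp
  next
    case False
    define x where "x = (\<lambda>m. if m = k then 1 else (0::real))"
    have xl: "x l = 0" using False by (simp add: x_def)
    have s1: "(\<Sum>m\<in>D. X l m * x m) = X l k" using assms(1,5) by (simp add: x_def sum_delta_r)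
    have s2: "(\<Sum>m\<in>D. x m * X m l) = X k l" using assms(1,5) by (simp add: x_def sum_delta_l)
    have q: "\<And>t. qf D X (x(l:= x l + t)) = X k k + t * X l k + t * X k l + t\<^sup>2 * X l l"
      using qf_shift[OF assms(1,6), of X x] s1 s2 qf_ind[OF assms(1,5), of X] by (simp add: x_def[symmetric])
    have sy: "X l k = X k l" using assms(3,5,6) unfolding symD_def by blast
    have g: "\<And>t. 0 \<le> X k k + 2 * t * X k l + t\<^sup>2 * X l l"
      using q assms(2) sy unfolding psd_def by (metis mult_2 distrib_right add.assoc)
    have "0 \<le> X k k + 2 * 1 * X k l + 1\<^sup>2 * X l l" by (rule g)
    moreover have "0 \<le> X k k + 2 * (-1) * X k l + (-1)\<^sup>2 * X l l" by (rule g)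
    ultimately show ?thesis using diag[OF assms(5)] diag[OF assms(6)] by (simp add: abs_le_iff)
  qed
qed

lemma Lam_decomp:
  assumes "\<forall>k\<in>D. \<forall>l\<in>D. X k l = (\<Sum>j<(n::nat). cs j k * cs j l)"
  shows "Lam D \<beta> X e = (\<Sum>j<n. qm D \<beta> (cs j) e)"
proof -
  have "Lam D \<beta> X e = (\<Sum>k\<in>D. \<Sum>l\<in>D. \<Sum>j<n. cs j k * cs j l * \<beta> k l e)"
    unfolding Lam_def using assms by (auto intro!: sum.cong simp: sum_distrib_right)
  also have "\<dots> = (\<Sum>k\<in>D. \<Sum>j<n. \<Sum>l\<in>D. cs j k * cs j l * \<beta> k l e)"
    by (rule sum.cong[OF refl], rule sum.swap)
  also have "\<dots> = (\<Sum>j<n. \<Sum>k\<in>D. \<Sum>l\<in>D. cs j k * cs j l * \<beta> k l e)"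
    by (rule sum.swap)
  finally show ?thesis unfolding qm_def .
qed

lemma qf_conv: "qf D (\<lambda>k l. (1-t) * X k l + t * Y k l) x = (1-t) * qf D X x + t * qf D Y x"
proof -
  have e: "\<And>k l. x k * ((1-t) * X k l + t * Y k l) * x l = (1-t) * (x k * X k l * x l) + t * (x k * Y k l * x l)"
    by algebra
  show ?thesis unfolding qf_def e by (simp only: sum.distrib sum_distrib_left[symmetric])
qed

lemma Lam_conv: "Lam D \<beta> (\<lambda>k l. (1-t) * X k l + t * Y k l) e = (1-t) * Lam D \<beta> X e + t * Lam D \<beta> Y e"
proof -
  have e: "\<And>k l. ((1-t) * X k l + t * Y k l) * \<beta> k l e = (1-t) * (X k l * \<beta> k l e) + t * (Y k l * \<beta> k l e)"
    by algebra
  show ?thesis unfolding Lam_def e by (simp only: sum.distrib sum_distrib_left[symmetric])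
qed

lemma qf_rank1: "qf D (\<lambda>k l. u k * u l) x = (\<Sum>k\<in>D. x k * u k)\<^sup>2"
  unfolding qf_def power2_eq_square sum_product by (simp add: algebra_simps)

lemma psd_rank1: "psd D (\<lambda>k l. u k * u l)"
  unfolding psd_def qf_rank1 by simp

lemma psd_conv: "psd D X \<Longrightarrow> psd D Y \<Longrightarrow> 0 \<le> t \<Longrightarrow> t \<le> 1 \<Longrightarrow> psd D (\<lambda>k l. (1-t) * X k l + t * Y k l)"
  unfolding psd_def qf_conv by (simp add: add_nonneg_nonneg)

lemma minimizer:
  fixes D :: "'i set" and E :: "'j set" and \<beta> :: "'i \<Rightarrow> 'i \<Rightarrow> 'j \<Rightarrow> real"
  assumes fD: "finite D" and d0: "d0 \<in> D" and fE: "finite E"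
  defines "P \<equiv> {X. psd D X \<and> symD D X \<and> (\<Sum>k\<in>D. X k k) = 1}"
  defines "val \<equiv> (\<lambda>X. \<Sum>e\<in>E. (Lam D \<beta> X e)\<^sup>2)"
  shows "\<exists>L\<in>P. \<forall>Y\<in>P. val L \<le> val Y"
proof -
  define X0 where "X0 = (\<lambda>k l. (if k = d0 then 1 else 0) * (if l = d0 then 1 else (0::real)))"
  have "X0 \<in> P" unfolding P_def
  proof (intro CollectI conjI)
    show "psd D X0" unfolding X0_def by (rule psd_rank1)
    show "symD D X0" unfolding X0_def symD_def by auto
    show "(\<Sum>k\<in>D. X0 k k) = 1" unfolding X0_def using fD d0 by (simp add: sum_delta_l)
  qed
  hence Pne: "val ` P \<noteq> {}" by blast
  have bdd: "bdd_below (val ` P)" unfolding val_def by (rule bdd_belowI[of _ 0]) (auto intro: sum_nonneg)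
  define m where "m = Inf (val ` P)"
  have "\<forall>n::nat. \<exists>X\<in>P. val X < m + inverse (real (Suc n))"
  proof
    fix n :: nat
    have "Inf (val ` P) < m + inverse (real (Suc n))" unfolding m_def by simp
    then obtain y where "y \<in> val ` P" "y < m + inverse (real (Suc n))" using cInf_lessD[OF Pne] by blast
    thus "\<exists>X\<in>P. val X < m + inverse (real (Suc n))" by blast
  qed
  then obtain f where fP: "\<And>n. f n \<in> P" and fv: "\<And>n. val (f n) < m + inverse (real (Suc n))"
    by metis
  have fb: "\<And>n k l. k \<in> D \<Longrightarrow> l \<in> D \<Longrightarrow> \<bar>f n k l\<bar> \<le> 1"
    using fP psd_bound[OF fD] unfolding P_def by blast
  have "\<forall>\<delta>\<subseteq>D \<times> D. \<exists>L::'i \<Rightarrow> 'i \<Rightarrow> real. \<exists>r::nat\<Rightarrow>nat.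
    strict_mono r \<and> (\<forall>\<epsilon>>0. eventually (\<lambda>n. \<forall>i\<in>\<delta>. dist ((\<lambda>X kl. X (fst kl) (snd kl)) (f (r n)) i) ((\<lambda>X kl. X (fst kl) (snd kl)) L i) < \<epsilon>) sequentially)"
  proof (rule compact_lemma_general[where unproj = "\<lambda>g k l. g (k, l)"])
    show "finite (D \<times> D)" using fD by simp
    fix kl assume kl: "kl \<in> D \<times> D"
    show "bounded ((\<lambda>x. x (fst kl) (snd kl)) ` range f)"
      unfolding bounded_iff using fb kl by (auto simp: mem_Times_iff)
  qed auto
  then obtain L :: "'i \<Rightarrow> 'i \<Rightarrow> real" and r where r: "strict_mono r"
    and conv: "\<forall>\<epsilon>>0. eventually (\<lambda>n. \<forall>i\<in>D \<times> D. dist (f (r n) (fst i) (snd i)) (L (fst i) (snd i)) < \<epsilon>) sequentially"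
    by blast
  have lim: "\<And>k l. k \<in> D \<Longrightarrow> l \<in> D \<Longrightarrow> (\<lambda>n. f (r n) k l) \<longlonglongrightarrow> L k l"
  proof -
    fix k l assume k: "k \<in> D" and l: "l \<in> D"
    show "(\<lambda>n. f (r n) k l) \<longlonglongrightarrow> L k l"
      unfolding tendsto_iff
    proof (intro allI impI)
      fix \<epsilon> :: real assume "\<epsilon> > 0"
      with conv have "eventually (\<lambda>n. \<forall>i\<in>D \<times> D. dist (f (r n) (fst i) (snd i)) (L (fst i) (snd i)) < \<epsilon>) sequentially" by blast
      thus "eventually (\<lambda>n. dist (f (r n) k l) (L k l) < \<epsilon>) sequentially"
        by (rule eventually_mono) (use k l in force)
    qed
  qed
  have limqf: "\<And>x. (\<lambda>n. qf D (f (r n)) x) \<longlonglongrightarrow> qf D L x"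
    unfolding qf_def by (intro tendsto_intros lim) auto
  have limLam: "\<And>e. (\<lambda>n. Lam D \<beta> (f (r n)) e) \<longlonglongrightarrow> Lam D \<beta> L e"
    unfolding Lam_def by (intro tendsto_intros lim) auto
  have limval: "(\<lambda>n. val (f (r n))) \<longlonglongrightarrow> val L"
    unfolding val_def by (intro tendsto_intros limLam)
  have LP: "L \<in> P" unfolding P_def
  proof (intro CollectI conjI)
    show "psd D L" unfolding psd_def
    proof
      fix x
      show "0 \<le> qf D L x"
        by (rule LIMSEQ_le_const[OF limqf]) (use fP in \<open>auto simp: P_def psd_def\<close>)
    qed
    show "symD D L" unfolding symD_def
    proof (intro ballI)
      fix k l assume k: "k \<in> D" and l: "l \<in> D"
      have "(\<lambda>n. f (r n) k l) = (\<lambda>n. f (r n) l k)" using fP k l unfolding P_def symD_def by blast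
      thus "L k l = L l k" using lim[OF k l] lim[OF l k] LIMSEQ_unique by metis
    qed
    have "(\<lambda>n. \<Sum>k\<in>D. f (r n) k k) \<longlonglongrightarrow> (\<Sum>k\<in>D. L k k)" by (intro tendsto_intros lim)
    moreover have "(\<lambda>n. \<Sum>k\<in>D. f (r n) k k) = (\<lambda>n. 1)" using fP unfolding P_def by blast
    ultimately show "(\<Sum>k\<in>D. L k k) = 1" using LIMSEQ_unique tendsto_const by metis
  qed
  have "\<forall>Y\<in>P. val L \<le> val Y"
  proof
    fix Y assume Y: "Y \<in> P"
    have mY: "m \<le> val Y" unfolding m_def using Y bdd by (auto intro: cInf_lower)
    have "\<And>n. val (f (r n)) \<le> val Y + inverse (real (Suc n))"
    proof -
      fix n
      have "n \<le> r n" using r by (rule seq_suble)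
      hence "inverse (real (Suc (r n))) \<le> inverse (real (Suc n))" by (simp add: le_imp_inverse_le)
      thus "val (f (r n)) \<le> val Y + inverse (real (Suc n))" using fv[of "r n"] mY by linarith
    qed
    moreover have "(\<lambda>n. val Y + inverse (real (Suc n))) \<longlonglongrightarrow> val Y + 0"
      by (intro tendsto_intros LIMSEQ_inverse_real_of_nat)
    ultimately show "val L \<le> val Y" using LIMSEQ_le[OF limval] by fastforce
  qed
  thus ?thesis using LP by blast
qed

lemma core:
  fixes D :: "'i set" and E :: "'j set" and \<beta> :: "'i \<Rightarrow> 'i \<Rightarrow> 'j \<Rightarrow> real"
  assumes fD: "finite D" and fE: "finite E"
  and H: "\<And>(n::nat) cs. (\<forall>e\<in>E. (\<Sum>j<n. qm D \<beta> (cs j) e) = 0) \<Longrightarrow> (\<forall>j<n. \<forall>k\<in>D. cs j k = 0)"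
  shows "\<exists>ell. \<forall>c. (\<exists>k\<in>D. c k \<noteq> 0) \<longrightarrow> (\<Sum>e\<in>E. ell e * qm D \<beta> c e) > 0"
proof (cases "D = {}")
  case True thus ?thesis by auto
next
  case False
  then obtain d0 where d0: "d0 \<in> D" by blast
  define P where "P = {X. psd D X \<and> symD D X \<and> (\<Sum>k\<in>D. X k k) = 1}"
  define val where "val = (\<lambda>X. \<Sum>e\<in>E. (Lam D \<beta> X e)\<^sup>2)"
  obtain L where LP: "L \<in> P" and Lmin: "\<And>Y. Y \<in> P \<Longrightarrow> val L \<le> val Y"
    using minimizer[OF fD d0 fE, of \<beta>] unfolding P_def val_def by blast
  define y where "y = Lam D \<beta> L"
  have "\<exists>e\<in>E. y e \<noteq> 0"
  proof (rule ccontr)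
    assume "\<not> (\<exists>e\<in>E. y e \<noteq> 0)"
    hence y0: "\<forall>e\<in>E. y e = 0" by blast
    obtain n :: nat and cs where cs: "\<forall>k\<in>D. \<forall>l\<in>D. L k l = (\<Sum>j<n. cs j k * cs j l)"
      using psd_decomp[OF fD, of L] LP unfolding P_def by blast
    have "\<forall>e\<in>E. (\<Sum>j<n. qm D \<beta> (cs j) e) = 0" using y0 Lam_decomp[OF cs, of \<beta>] unfolding y_def by simp
    hence "\<forall>j<n. \<forall>k\<in>D. cs j k = 0" by (rule H)
    hence "\<forall>k\<in>D. L k k = 0" using cs by simp
    hence "(\<Sum>k\<in>D. L k k) = 0" by simp
    thus False using LP unfolding P_def by simp
  qed
  then obtain e0 where e0: "e0 \<in> E" "y e0 \<noteq> 0" by blast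
  have valpos: "val L > 0" unfolding val_def y_def[symmetric]
    by (rule sum_pos2[OF fE e0(1)]) (use e0(2) in auto)
  have key: "\<And>C. C \<in> P \<Longrightarrow> (\<Sum>e\<in>E. y e * Lam D \<beta> C e) \<ge> val L"
  proof -
    fix C assume C: "C \<in> P"
    define w where "w = (\<lambda>e. Lam D \<beta> C e - y e)"
    have h: "\<And>t. 0 < t \<Longrightarrow> t \<le> 1 \<Longrightarrow> 0 \<le> 2 * (\<Sum>e\<in>E. y e * w e) + t * (\<Sum>e\<in>E. (w e)\<^sup>2)"
    proof -
      fix t :: real assume t0: "0 < t" and t1: "t \<le> 1"
      define Z where "Z = (\<lambda>k l. (1-t) * L k l + t * C k l)"
      have ZP: "Z \<in> P" unfolding P_def Z_def
      proof (intro CollectI conjI)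
        show "psd D (\<lambda>k l. (1 - t) * L k l + t * C k l)" using LP C t0 t1 unfolding P_def by (intro psd_conv) auto
        show "symD D (\<lambda>k l. (1 - t) * L k l + t * C k l)" unfolding symD_def
        proof (intro ballI)
          fix k l assume "k \<in> D" "l \<in> D"
          have a: "L k l = L l k" and b: "C k l = C l k" using LP C \<open>k \<in> D\<close> \<open>l \<in> D\<close> unfolding P_def symD_def by blast+
          show "(1 - t) * L k l + t * C k l = (1 - t) * L l k + t * C l k" unfolding a b by (rule refl)
        qed
        have "(\<Sum>k\<in>D. (1 - t) * L k k + t * C k k) = (1-t) * (\<Sum>k\<in>D. L k k) + t * (\<Sum>k\<in>D. C k k)"
          by (simp add: sum.distrib sum_distrib_left)
        thus "(\<Sum>k\<in>D. (1 - t) * L k k + t * C k k) = 1" using LP C unfolding P_def by simp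
      qed
      have LZ: "\<And>e. Lam D \<beta> Z e = y e + t * w e"
      proof -
        fix e
        have "Lam D \<beta> Z e = (1-t) * y e + t * Lam D \<beta> C e" unfolding Z_def Lam_conv y_def by (rule refl)
        thus "Lam D \<beta> Z e = y e + t * w e" unfolding w_def by algebra
      qed
      have "val Z = (\<Sum>e\<in>E. (y e)\<^sup>2 + t * (2 * (y e * w e) + t * (w e)\<^sup>2))"
        unfolding val_def LZ by (rule sum.cong[OF refl]) algebra
      also have "\<dots> = val L + t * (2 * (\<Sum>e\<in>E. y e * w e) + t * (\<Sum>e\<in>E. (w e)\<^sup>2))"
        unfolding val_def y_def[symmetric] by (simp add: sum.distrib sum_distrib_left[symmetric] distrib_left)
      finally have "val L \<le> val L + t * (2 * (\<Sum>e\<in>E. y e * w e) + t * (\<Sum>e\<in>E. (w e)\<^sup>2))"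
        using Lmin[OF ZP] by linarith
      hence "0 \<le> t * (2 * (\<Sum>e\<in>E. y e * w e) + t * (\<Sum>e\<in>E. (w e)\<^sup>2))" by linarith
      thus "0 \<le> 2 * (\<Sum>e\<in>E. y e * w e) + t * (\<Sum>e\<in>E. (w e)\<^sup>2)" using t0
        by (simp add: zero_le_mult_iff)
    qed
    have nn: "0 \<le> (\<Sum>e\<in>E. (w e)\<^sup>2)" by (rule sum_nonneg) simp
    have "0 \<le> (\<Sum>e\<in>E. y e * w e)" by (rule small_t[OF nn h])
    also have "(\<Sum>e\<in>E. y e * w e) = (\<Sum>e\<in>E. y e * Lam D \<beta> C e) - val L"
      unfolding w_def val_def y_def[symmetric] by (simp add: algebra_simps sum_subtractf power2_eq_square)
    finally show "(\<Sum>e\<in>E. y e * Lam D \<beta> C e) \<ge> val L" by simp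
  qed
  have "\<forall>c::'i \<Rightarrow> real. (\<exists>k\<in>D. c k \<noteq> 0) \<longrightarrow> (\<Sum>e\<in>E. y e * qm D \<beta> c e) > 0"
  proof (intro allI impI)
    fix c :: "'i \<Rightarrow> real" assume "\<exists>k\<in>D. c k \<noteq> 0"
    then obtain k0 where k0: "k0 \<in> D" "c k0 \<noteq> 0" by blast
    define s where "s = (\<Sum>k\<in>D. (c k)\<^sup>2)"
    have spos: "s > 0" unfolding s_def by (rule sum_pos2[OF fD k0(1)]) (use k0(2) in auto)
    define u where "u = (\<lambda>k. c k / sqrt s)"
    define C where "C = (\<lambda>k l. u k * u l)"
    have ss: "sqrt s * sqrt s = s" using spos by simp
    have uu: "\<And>k l. u k * u l = c k * c l / s"
    proof -
      fix k l
      have "u k * u l = c k * c l / (sqrt s * sqrt s)" unfolding u_def by simp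
      thus "u k * u l = c k * c l / s" unfolding ss .
    qed
    have CP: "C \<in> P" unfolding P_def
    proof (intro CollectI conjI)
      show "psd D C" unfolding C_def by (rule psd_rank1)
      show "symD D C" unfolding C_def symD_def by (simp add: mult.commute)
      have "(\<Sum>k\<in>D. C k k) = (\<Sum>k\<in>D. (c k)\<^sup>2) / s" unfolding C_def uu
        by (simp add: sum_divide_distrib power2_eq_square)
      thus "(\<Sum>k\<in>D. C k k) = 1" using spos unfolding s_def by simp
    qed
    have LC: "\<And>e. Lam D \<beta> C e = qm D \<beta> c e / s"
      unfolding Lam_def qm_def C_def uu by (simp add: sum_divide_distrib)
    have "0 < val L" by (rule valpos)
    also have "\<dots> \<le> (\<Sum>e\<in>E. y e * Lam D \<beta> C e)" by (rule key[OF CP])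
    also have "\<dots> = (\<Sum>e\<in>E. y e * qm D \<beta> c e) / s" unfolding LC by (simp add: sum_divide_distrib)
    finally show "(\<Sum>e\<in>E. y e * qm D \<beta> c e) > 0" using spos by (simp add: zero_less_divide_iff)
  qed
  thus ?thesis by blast
qed


locale sa =
  fixes K :: "complex set" and sm :: "complex \<Rightarrow> 'a::ring_1 \<Rightarrow> 'a" and st :: "'a \<Rightarrow> 'a"
  assumes sa: "star_algebra K sm st"
begin

lemma Kcases: "K = \<real> \<or> K = UNIV" using sa unfolding star_algebra_def scalar_field_def by blast
lemma of_real_K: "complex_of_real r \<in> K" using Kcases by auto
lemma zero_K: "0 \<in> K" using of_real_K[of 0] by simp
lemma one_K: "1 \<in> K" using of_real_K[of 1] by simp
lemma neg_K: "c \<in> K \<Longrightarrow> - c \<in> K" using Kcases by auto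
lemma cnj_K: "c \<in> K \<Longrightarrow> cnj c \<in> K" using Kcases by (auto simp: Reals_cnj_iff)

lemma sm_add: "c \<in> K \<Longrightarrow> sm c (a + b) = sm c a + sm c b" using sa unfolding star_algebra_def by blast
lemma sm_addc: "c \<in> K \<Longrightarrow> d \<in> K \<Longrightarrow> sm (c + d) a = sm c a + sm d a" using sa unfolding star_algebra_def by blast
lemma sm_mult: "c \<in> K \<Longrightarrow> d \<in> K \<Longrightarrow> sm (c * d) a = sm c (sm d a)" using sa unfolding star_algebra_def by blast
lemma sm_one: "sm 1 a = a" using sa unfolding star_algebra_def by blast
lemma sm_mul_left: "c \<in> K \<Longrightarrow> sm c (a * b) = sm c a * b" using sa unfolding star_algebra_def by blast
lemma sm_mul_right: "c \<in> K \<Longrightarrow> sm c (a * b) = a * sm c b" using sa unfolding star_algebra_def by blast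
lemma st_add: "st (a + b) = st a + st b" using sa unfolding star_algebra_def by blast
lemma st_sm: "c \<in> K \<Longrightarrow> st (sm c a) = sm (cnj c) (st a)" using sa unfolding star_algebra_def by blast
lemma st_mul: "st (a * b) = st b * st a" using sa unfolding star_algebra_def by blast
lemma st_st: "st (st a) = a" using sa unfolding star_algebra_def by blast

lemma sm_zero: "sm 0 a = 0"
proof -
  have "sm (0 + 0) a = sm 0 a + sm 0 a" using sm_addc zero_K by blast
  thus ?thesis by simp
qed
lemma sm_0: "c \<in> K \<Longrightarrow> sm c 0 = 0"
proof -
  assume c: "c \<in> K"
  have "sm c (0 + 0) = sm c 0 + sm c 0" using sm_add[OF c] by blast
  thus ?thesis by simp
qed
lemma sm_neg: "c \<in> K \<Longrightarrow> sm c (- a) = - sm c a"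
proof -
  assume c: "c \<in> K"
  have "sm c (a + - a) = sm c a + sm c (- a)" using sm_add[OF c] by blast
  hence "sm c a + sm c (- a) = 0" using sm_0[OF c] by simp
  thus ?thesis by (simp add: add_eq_0_iff2)
qed
lemma sm_negc: "c \<in> K \<Longrightarrow> sm (- c) a = - sm c a"
proof -
  assume c: "c \<in> K"
  have "sm (c + - c) a = sm c a + sm (- c) a" using sm_addc[OF c neg_K[OF c]] by blast
  hence "sm c a + sm (- c) a = 0" using sm_zero by simp
  thus ?thesis by (simp add: add_eq_0_iff2)
qed
lemma sm_diff: "c \<in> K \<Longrightarrow> sm c (a - b) = sm c a - sm c b"
  using sm_add[of c a "- b"] sm_neg[of c b] by simp
lemma sm_sum: "c \<in> K \<Longrightarrow> sm c (\<Sum>i\<in>A. f i) = (\<Sum>i\<in>A. sm c (f i))"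
  by (induction A rule: infinite_finite_induct) (auto simp: sm_0 sm_add)

lemma st_zero: "st 0 = 0"
proof -
  have "st (0 + 0) = st 0 + st 0" by (rule st_add)
  thus ?thesis by simp
qed
lemma st_neg: "st (- a) = - st a"
proof -
  have "st (a + - a) = st a + st (- a)" by (rule st_add)
  hence "st a + st (- a) = 0" using st_zero by simp
  thus ?thesis by (simp add: add_eq_0_iff2)
qed
lemma st_diff: "st (a - b) = st a - st b" using st_add[of a "- b"] st_neg[of b] by simp
lemma st_one: "st 1 = 1"
proof -
  have "st 1 = st 1 * st (st 1)" using st_st by simp
  also have "\<dots> = st (st 1 * 1)" by (rule st_mul[symmetric])
  also have "\<dots> = 1" using st_st by simp
  finally show ?thesis .
qed
lemma st_sum: "st (\<Sum>i\<in>A. f i) = (\<Sum>i\<in>A. st (f i))"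
  by (induction A rule: infinite_finite_induct) (auto simp: st_zero st_add)

definition rs :: "real \<Rightarrow> 'a \<Rightarrow> 'a" where "rs r a = sm (complex_of_real r) a"

lemma rs_add: "rs r (a + b) = rs r a + rs r b" unfolding rs_def using sm_add of_real_K by blast
lemma rs_addc: "rs (r + s) a = rs r a + rs s a" unfolding rs_def using sm_addc of_real_K by (metis of_real_add)
lemma rs_mult: "rs r (rs s a) = rs (r * s) a" unfolding rs_def using sm_mult of_real_K by (metis of_real_mult)
lemma rs_one: "rs 1 a = a" unfolding rs_def using sm_one by simp
lemma rs_zero: "rs 0 a = 0" unfolding rs_def using sm_zero by simp
lemma rs_0: "rs r 0 = 0" unfolding rs_def using sm_0 of_real_K by blast
lemma rs_neg: "rs r (- a) = - rs r a" unfolding rs_def using sm_neg of_real_K by blast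
lemma rs_negc: "rs (- r) a = - rs r a" unfolding rs_def using sm_negc of_real_K by (metis of_real_minus)
lemma rs_diff: "rs r (a - b) = rs r a - rs r b" unfolding rs_def using sm_diff of_real_K by blast
lemma rs_diffc: "rs (r - s) a = rs r a - rs s a" using rs_addc[of r "- s" a] rs_negc[of s a] by simp
lemma rs_mul_left: "rs r (a * b) = rs r a * b" unfolding rs_def using sm_mul_left of_real_K by blast
lemma rs_mul_right: "rs r (a * b) = a * rs r b" unfolding rs_def using sm_mul_right of_real_K by blast
lemma st_rs: "st (rs r a) = rs r (st a)" unfolding rs_def using st_sm of_real_K by simp
lemma rs_sum: "rs r (\<Sum>i\<in>A. f i) = (\<Sum>i\<in>A. rs r (f i))"
  unfolding rs_def using sm_sum of_real_K by blast
lemma rs_sumc: "rs (\<Sum>i\<in>A. f i) a = (\<Sum>i\<in>A. rs (f i) a)"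
  by (induction A rule: infinite_finite_induct) (auto simp: rs_zero rs_addc)
lemma rs_minus_one: "rs (-1) a = - a" using rs_negc[of 1 a] rs_one by simp

lemma sm_decomp: "c \<in> K \<Longrightarrow> sm c s = rs (Re c) s + rs (Im c) (sm \<i> s)"
proof -
  assume c: "c \<in> K"
  show ?thesis
  proof (cases "K = UNIV")
    case True
    have "c = complex_of_real (Re c) + complex_of_real (Im c) * \<i>" by (simp add: complex_eq_iff)
    hence "sm c s = sm (complex_of_real (Re c)) s + sm (complex_of_real (Im c) * \<i>) s"
      using sm_addc True by (metis UNIV_I)
    also have "sm (complex_of_real (Im c) * \<i>) s = sm (complex_of_real (Im c)) (sm \<i> s)"
      using sm_mult True by blast
    finally show ?thesis unfolding rs_def .
  next
    case False
    hence "c \<in> \<real>" using c Kcases by auto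
    hence "c = complex_of_real (Re c)" "Im c = 0" by (auto simp: complex_is_Real_iff complex_eq_iff)
    thus ?thesis unfolding rs_def using sm_zero by (metis add_0_right of_real_0)
  qed
qed

definition rsub :: "'a set \<Rightarrow> bool" where
  "rsub X \<longleftrightarrow> 0 \<in> X \<and> (\<forall>x\<in>X. \<forall>y\<in>X. x + y \<in> X) \<and> (\<forall>r. \<forall>x\<in>X. rs r x \<in> X)"

lemma rsub0: "rsub X \<Longrightarrow> 0 \<in> X" unfolding rsub_def by blast
lemma rsub_add: "rsub X \<Longrightarrow> x \<in> X \<Longrightarrow> y \<in> X \<Longrightarrow> x + y \<in> X" unfolding rsub_def by blast
lemma rsub_rs: "rsub X \<Longrightarrow> x \<in> X \<Longrightarrow> rs r x \<in> X" unfolding rsub_def by blast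
lemma rsub_neg: "rsub X \<Longrightarrow> x \<in> X \<Longrightarrow> - x \<in> X" using rsub_rs[of X x "-1"] rs_minus_one by simp
lemma rsub_diff: "rsub X \<Longrightarrow> x \<in> X \<Longrightarrow> y \<in> X \<Longrightarrow> x - y \<in> X"
  using rsub_add[of X x "- y"] rsub_neg[of X y] by simp
lemma rsub_sum: "rsub X \<Longrightarrow> (\<And>i. i \<in> A \<Longrightarrow> f i \<in> X) \<Longrightarrow> (\<Sum>i\<in>A. f i) \<in> X"
  by (induction A rule: infinite_finite_induct) (auto simp: rsub0 rsub_add)

definition lc :: "'a set \<Rightarrow> ('a \<Rightarrow> real) \<Rightarrow> 'a" where "lc B c = (\<Sum>b\<in>B. rs (c b) b)"

lemma lc_add: "lc B (\<lambda>b. c b + d b) = lc B c + lc B d"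
  unfolding lc_def by (simp add: rs_addc sum.distrib)
lemma lc_scale: "lc B (\<lambda>b. r * c b) = rs r (lc B c)"
  unfolding lc_def by (simp add: rs_sum rs_mult)
lemma lc_diff: "lc B (\<lambda>b. c b - d b) = lc B c - lc B d"
  unfolding lc_def by (simp add: rs_diffc sum_subtractf)
lemma lc_cong: "(\<And>b. b \<in> B \<Longrightarrow> c b = d b) \<Longrightarrow> lc B c = lc B d"
  unfolding lc_def by (rule sum.cong) auto
lemma lc_zero: "(\<And>b. b \<in> B \<Longrightarrow> c b = 0) \<Longrightarrow> lc B c = 0"
  unfolding lc_def by (simp add: rs_zero)
lemma lc_delta: "finite B \<Longrightarrow> b0 \<in> B \<Longrightarrow> lc B (\<lambda>b. if b = b0 then r else 0) = rs r b0"
proof -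
  assume fB: "finite B" and b0: "b0 \<in> B"
  have "lc B (\<lambda>b. if b = b0 then r else 0) = (\<Sum>b\<in>B. if b = b0 then rs r b0 else 0)"
    unfolding lc_def by (rule sum.cong) (auto simp: rs_zero)
  thus ?thesis using fB b0 by simp
qed
lemma lc_remove: "finite B \<Longrightarrow> b \<in> B \<Longrightarrow> lc B c = rs (c b) b + lc (B - {b}) c"
  unfolding lc_def by (simp add: sum.remove)

lemma in_lc:
  assumes "finite B" "finite S" "\<And>s. s \<in> S \<Longrightarrow> g s \<in> B"
  shows "\<exists>d. (\<Sum>s\<in>S. rs (f s) (g s)) = lc B d"
  using assms(2,3)
proof (induction S rule: finite_induct)
  case empty thus ?case using lc_zero[of B "\<lambda>_. 0"] by auto
next
  case (insert s S)
  then obtain d where d: "(\<Sum>s\<in>S. rs (f s) (g s)) = lc B d" by blast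
  have gs: "g s \<in> B" using insert by blast
  have "(\<Sum>s\<in>insert s S. rs (f s) (g s)) = lc B (\<lambda>b. if b = g s then f s else 0) + lc B d"
    using insert.hyps d lc_delta[OF assms(1) gs] by simp
  also have "\<dots> = lc B (\<lambda>b. (if b = g s then f s else 0) + d b)" by (rule lc_add[symmetric])
  finally show ?case by blast
qed

definition spans :: "'a set \<Rightarrow> 'a set \<Rightarrow> bool" where
  "spans X B \<longleftrightarrow> (\<forall>a. \<exists>c. a - lc B c \<in> X)"
definition indep :: "'a set \<Rightarrow> 'a set \<Rightarrow> bool" where
  "indep X B \<longleftrightarrow> (\<forall>c. lc B c \<in> X \<longrightarrow> (\<forall>b\<in>B. c b = 0))"

lemma spans_mono: "X \<subseteq> Y \<Longrightarrow> spans X B \<Longrightarrow> spans Y B" unfolding spans_def by blast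

lemma basis_exists:
  assumes "rsub X" "finite B" "spans X B"
  shows "\<exists>B'\<subseteq>B. spans X B' \<and> indep X B'"
  using assms(2,3)
proof (induction "card B" arbitrary: B rule: less_induct)
  case less
  show ?case
  proof (cases "indep X B")
    case True thus ?thesis using less by blast
  next
    case False
    then obtain c b where cX: "lc B c \<in> X" and b: "b \<in> B" and cb: "c b \<noteq> 0"
      unfolding indep_def by blast
    have sp: "spans X (B - {b})" unfolding spans_def
    proof
      fix a
      obtain d where d: "a - lc B d \<in> X" using less.prems(2) unfolding spans_def by blast
      define e where "e = (\<lambda>k. d k - (d b / c b) * c k)"
      have "lc (B - {b}) e = lc (B - {b}) d - rs (d b / c b) (lc (B - {b}) c)"
        unfolding e_def by (simp only: lc_diff lc_scale)
      hence "a - lc (B - {b}) e = (a - lc B d) + rs (d b / c b) (rs (c b) b + lc (B - {b}) c)"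
        using lc_remove[OF less.prems(1) b, of d] cb
        by (simp add: rs_add rs_mult algebra_simps)
      also have "\<dots> \<in> X" using lc_remove[OF less.prems(1) b, of c] cX d assms(1)
        by (simp add: rsub_add rsub_rs)
      finally show "\<exists>e. a - lc (B - {b}) e \<in> X" by blast
    qed
    have "card (B - {b}) < card B" using less.prems(1) b by (rule card_Diff1_less)
    then obtain B' where "B' \<subseteq> B - {b}" "spans X B'" "indep X B'"
      using less.hyps[of "B - {b}"] sp less.prems(1) by blast
    thus ?thesis by blast
  qed
qed

definition coord :: "'a set \<Rightarrow> 'a set \<Rightarrow> 'a \<Rightarrow> 'a \<Rightarrow> real" where
  "coord X B x = (SOME c. x - lc B c \<in> X)"

lemma coord_in: "spans X B \<Longrightarrow> x - lc B (coord X B x) \<in> X"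
  unfolding coord_def spans_def by (metis (mono_tags) someI_ex)

lemma coord_unique:
  assumes "rsub X" "spans X B" "indep X B" "x - lc B c \<in> X" "b \<in> B"
  shows "coord X B x b = c b"
proof -
  have "(x - lc B c) - (x - lc B (coord X B x)) \<in> X"
    using rsub_diff[OF assms(1) assms(4) coord_in[OF assms(2)]] .
  hence "lc B (\<lambda>b. coord X B x b - c b) \<in> X" by (simp add: lc_diff)
  hence "coord X B x b - c b = 0" using assms(3,5) unfolding indep_def by blast
  thus ?thesis by simp
qed

lemma coord_add:
  assumes "rsub X" "spans X B" "indep X B" "b \<in> B"
  shows "coord X B (x + y) b = coord X B x b + coord X B y b"
proof -
  have "(x + y) - lc B (\<lambda>b. coord X B x b + coord X B y b) = (x - lc B (coord X B x)) + (y - lc B (coord X B y))"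
    by (simp add: lc_add)
  also have "\<dots> \<in> X" using assms(1) coord_in[OF assms(2)] by (simp add: rsub_add)
  finally show ?thesis using coord_unique[OF assms(1-3) _ assms(4)] by blast
qed

lemma coord_rs:
  assumes "rsub X" "spans X B" "indep X B" "b \<in> B"
  shows "coord X B (rs r x) b = r * coord X B x b"
proof -
  have "rs r x - lc B (\<lambda>b. r * coord X B x b) = rs r (x - lc B (coord X B x))"
    by (simp add: lc_scale rs_diff)
  also have "\<dots> \<in> X" using assms(1) coord_in[OF assms(2)] by (simp add: rsub_rs)
  finally show ?thesis using coord_unique[OF assms(1-3) _ assms(4)] by blast
qed

lemma coord_X:
  assumes "rsub X" "spans X B" "indep X B" "b \<in> B" "x \<in> X"
  shows "coord X B x b = 0"
proof -
  have "x - lc B (\<lambda>_. 0) \<in> X" using assms(5) lc_zero[of B "\<lambda>_. 0"] by simp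
  thus ?thesis using coord_unique[OF assms(1-3) _ assms(4)] by blast
qed

lemma coord_eq:
  assumes "rsub X" "spans X B" "indep X B" "b \<in> B" "x - y \<in> X"
  shows "coord X B x b = coord X B y b"
proof -
  have "x - lc B (coord X B y) = (x - y) + (y - lc B (coord X B y))" by simp
  also have "\<dots> \<in> X" by (rule rsub_add[OF assms(1,5) coord_in[OF assms(2)]])
  finally show ?thesis using coord_unique[OF assms(1-3) _ assms(4)] by blast
qed

lemma coord_sum:
  assumes "rsub X" "spans X B" "indep X B" "b \<in> B"
  shows "coord X B (\<Sum>i\<in>A. f i) b = (\<Sum>i\<in>A. coord X B (f i) b)"
proof (induction A rule: infinite_finite_induct)
  case (infinite A) thus ?case using coord_X[OF assms rsub0[OF assms(1)]] by simp
next
  case empty thus ?case using coord_X[OF assms rsub0[OF assms(1)]] by simp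
next
  case (insert i A) thus ?case using coord_add[OF assms] by simp
qed

definition Jset :: "'a set \<Rightarrow> 'a set" where "Jset I = {x + st y | x y. x \<in> I \<and> y \<in> I}"

lemma LI_sm: "left_ideal K sm I \<Longrightarrow> c \<in> K \<Longrightarrow> x \<in> I \<Longrightarrow> sm c x \<in> I" unfolding left_ideal_def by blast
lemma LI_mul: "left_ideal K sm I \<Longrightarrow> x \<in> I \<Longrightarrow> a * x \<in> I" unfolding left_ideal_def by blast
lemma LI_rsub: "left_ideal K sm I \<Longrightarrow> rsub I"
  unfolding rsub_def rs_def using of_real_K unfolding left_ideal_def by blast

lemma J_rsub:
  assumes "left_ideal K sm I" shows "rsub (Jset I)"
proof -
  have I: "rsub I" using LI_rsub[OF assms] .
  show ?thesis unfolding rsub_def Jset_def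
  proof (intro conjI ballI allI)
    show "0 \<in> {x + st y |x y. x \<in> I \<and> y \<in> I}" using rsub0[OF I] st_zero by force
    fix u v assume "u \<in> {x + st y |x y. x \<in> I \<and> y \<in> I}" "v \<in> {x + st y |x y. x \<in> I \<and> y \<in> I}"
    then obtain x y x' y' where "u = x + st y" "v = x' + st y'" "x \<in> I" "y \<in> I" "x' \<in> I" "y' \<in> I" by blast
    moreover have "u + v = (x + x') + st (y + y')" using calculation by (simp add: st_add algebra_simps)
    ultimately show "u + v \<in> {x + st y |x y. x \<in> I \<and> y \<in> I}" using rsub_add[OF I] by blast
  next
    fix r u assume "u \<in> {x + st y |x y. x \<in> I \<and> y \<in> I}"
    then obtain x y where "u = x + st y" "x \<in> I" "y \<in> I" by blast
    moreover have "rs r u = rs r x + st (rs r y)" using calculation by (simp add: st_rs rs_add)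
    ultimately show "rs r u \<in> {x + st y |x y. x \<in> I \<and> y \<in> I}" using rsub_rs[OF I] by blast
  qed
qed

lemma I_sub_J: "left_ideal K sm I \<Longrightarrow> x \<in> I \<Longrightarrow> x \<in> Jset I"
  unfolding Jset_def using st_zero LI_rsub rsub0 by force
lemma stI_sub_J: "left_ideal K sm I \<Longrightarrow> y \<in> I \<Longrightarrow> st y \<in> Jset I"
  unfolding Jset_def using LI_rsub rsub0 by force
lemma J_st: "x \<in> Jset I \<Longrightarrow> st x \<in> Jset I"
proof -
  assume "x \<in> Jset I"
  then obtain u v where "x = u + st v" "u \<in> I" "v \<in> I" unfolding Jset_def by blast
  hence "st x = v + st u" by (simp add: st_add st_st add.commute)
  thus ?thesis unfolding Jset_def using \<open>u \<in> I\<close> \<open>v \<in> I\<close> by blast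
qed
lemma stI_mul_J: "left_ideal K sm I \<Longrightarrow> x \<in> I \<Longrightarrow> st x * a \<in> Jset I"
proof -
  assume LI: "left_ideal K sm I" and x: "x \<in> I"
  have "st x * a = st (st a * x)" by (simp add: st_mul st_st)
  thus ?thesis using stI_sub_J[OF LI LI_mul[OF LI x]] by simp
qed
lemma J_smi: "K = UNIV \<Longrightarrow> left_ideal K sm I \<Longrightarrow> x \<in> Jset I \<Longrightarrow> sm \<i> x \<in> Jset I"
proof -
  assume KU: "K = UNIV" and LI: "left_ideal K sm I" and "x \<in> Jset I"
  then obtain u v where "x = u + st v" "u \<in> I" "v \<in> I" unfolding Jset_def by blast
  have "sm \<i> x = sm \<i> u + st (sm (- \<i>) v)" using \<open>x = u + st v\<close> KU by (simp add: sm_add st_sm)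
  moreover have "sm \<i> u \<in> I" "sm (- \<i>) v \<in> I" using LI_sm[OF LI] KU \<open>u \<in> I\<close> \<open>v \<in> I\<close> by auto
  ultimately show ?thesis unfolding Jset_def by blast
qed

lemma herm_sq: "left_ideal K sm I \<Longrightarrow> a - b \<in> I \<Longrightarrow> st a * a - st b * b \<in> Jset I"
proof -
  assume LI: "left_ideal K sm I" and ab: "a - b \<in> I"
  define x where "x = a - b"
  have a: "a = b + x" unfolding x_def by simp
  have "st a * a - st b * b = (st b * x + st x * x) + st x * b"
    unfolding a by (simp add: st_add algebra_simps)
  moreover have "st b * x + st x * x \<in> I" using LI_mul[OF LI] ab LI_rsub[OF LI] rsub_add unfolding x_def by blast
  moreover have "st x * b \<in> Jset I" using stI_mul_J[OF LI] ab unfolding x_def by blast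
  ultimately show ?thesis using rsub_add[OF J_rsub[OF LI]] I_sub_J[OF LI] by metis
qed

lemma herm_expand: "st (lc D c) * lc D c = (\<Sum>k\<in>D. \<Sum>l\<in>D. rs (c k * c l) (st k * l))"
proof -
  have "st (lc D c) = (\<Sum>k\<in>D. rs (c k) (st k))" unfolding lc_def by (simp add: st_sum st_rs)
  hence "st (lc D c) * lc D c = (\<Sum>k\<in>D. \<Sum>l\<in>D. rs (c k) (st k) * rs (c l) l)"
    unfolding lc_def by (simp add: sum_product)
  also have "\<dots> = (\<Sum>k\<in>D. \<Sum>l\<in>D. rs (c k * c l) (st k * l))"
    by (intro sum.cong refl) (simp add: rs_mul_left[symmetric] rs_mul_right[symmetric] rs_mult mult.commute)
  finally show ?thesis .
qed

lemma pos_functional: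
  assumes LI: "left_ideal K sm I" and RI: "real_ideal st I" and FC: "finite_codim K sm I"
  shows "\<exists>D g. finite D \<and> spans I D \<and> indep I D \<and> (\<forall>x y. g (x + y) = g x + g y) \<and>
     (\<forall>r x. g (rs r x) = r * g x) \<and> (\<forall>x. g (st x) = g x) \<and> (\<forall>x\<in>Jset I. g x = 0) \<and>
     (\<forall>a. a \<notin> I \<longrightarrow> g (st a * a) > 0)"
proof -
  have rI: "rsub I" by (rule LI_rsub[OF LI])
  define J where "J = Jset I"
  have rJ: "rsub J" unfolding J_def by (rule J_rsub[OF LI])
  obtain S where fS: "finite S" and Ssp: "\<forall>a. \<exists>c. (\<forall>s\<in>S. c s \<in> K) \<and> a - (\<Sum>s\<in>S. sm (c s) s) \<in> I"
    using FC unfolding finite_codim_def by blast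
  define S' where "S' = S \<union> (sm \<i>) ` S"
  have fS': "finite S'" unfolding S'_def using fS by simp
  have spI: "spans I S'" unfolding spans_def
  proof
    fix a
    obtain c where c: "\<forall>s\<in>S. c s \<in> K" "a - (\<Sum>s\<in>S. sm (c s) s) \<in> I" using Ssp by blast
    have "(\<Sum>s\<in>S. sm (c s) s) = (\<Sum>s\<in>S. rs (Re (c s)) s) + (\<Sum>s\<in>S. rs (Im (c s)) (sm \<i> s))"
      using c(1) by (simp add: sm_decomp sum.distrib)
    moreover obtain d1 where "(\<Sum>s\<in>S. rs (Re (c s)) s) = lc S' d1"
      using in_lc[OF fS' fS, of id "\<lambda>s. Re (c s)"] unfolding S'_def by auto
    moreover obtain d2 where "(\<Sum>s\<in>S. rs (Im (c s)) (sm \<i> s)) = lc S' d2"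
      using in_lc[OF fS' fS, of "sm \<i>" "\<lambda>s. Im (c s)"] unfolding S'_def by auto
    ultimately have "(\<Sum>s\<in>S. sm (c s) s) = lc S' (\<lambda>b. d1 b + d2 b)" by (simp add: lc_add)
    thus "\<exists>d. a - lc S' d \<in> I" using c(2) by metis
  qed
  obtain D where DS: "D \<subseteq> S'" and spD: "spans I D" and inD: "indep I D"
    using basis_exists[OF rI fS' spI] by blast
  have fD: "finite D" using DS fS' finite_subset by blast
  have spJ: "spans J S'" by (rule spans_mono[OF _ spI]) (use I_sub_J[OF LI] in \<open>auto simp: J_def\<close>)
  obtain E where ES: "E \<subseteq> S'" and spE: "spans J E" and inE: "indep J E"
    using basis_exists[OF rJ fS' spJ] by blast
  have fE: "finite E" using ES fS' finite_subset by blast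
  define co where "co = coord J E"
  have co_add: "\<And>x y e. e \<in> E \<Longrightarrow> co (x + y) e = co x e + co y e"
    unfolding co_def using coord_add[OF rJ spE inE] by blast
  have co_rs: "\<And>r x e. e \<in> E \<Longrightarrow> co (rs r x) e = r * co x e"
    unfolding co_def using coord_rs[OF rJ spE inE] by blast
  have co_J: "\<And>x e. e \<in> E \<Longrightarrow> x \<in> J \<Longrightarrow> co x e = 0"
    unfolding co_def using coord_X[OF rJ spE inE] by blast
  have co_sum: "\<And>e A f. e \<in> E \<Longrightarrow> co (\<Sum>i\<in>A. f i) e = (\<Sum>i\<in>A. co (f i) e)"
    unfolding co_def using coord_sum[OF rJ spE inE] by blast
  define \<beta> where "\<beta> = (\<lambda>k l. co (st k * l))"
  have qmco: "\<And>c e. e \<in> E \<Longrightarrow> qm D \<beta> c e = co (st (lc D c) * lc D c) e"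
    unfolding herm_expand qm_def \<beta>_def by (simp add: co_sum co_rs)
  have H: "\<And>(n::nat) cs. (\<forall>e\<in>E. (\<Sum>j<n. qm D \<beta> (cs j) e) = 0) \<Longrightarrow> (\<forall>j<n. \<forall>k\<in>D. cs j k = 0)"
  proof -
    fix n :: nat and cs
    assume h: "\<forall>e\<in>E. (\<Sum>j<n. qm D \<beta> (cs j) e) = 0"
    define a where "a = (\<lambda>j. lc D (cs j))"
    define x where "x = (\<Sum>j<n. st (a j) * a j)"
    have "\<forall>e\<in>E. co x e = 0" using h unfolding x_def a_def by (simp add: co_sum qmco)
    hence "lc E (co x) = 0" by (intro lc_zero) auto
    hence "x \<in> J" using coord_in[OF spE, of x] unfolding co_def by simp
    hence "\<forall>j<n. a j \<in> I" using RI unfolding real_ideal_def J_def Jset_def x_def by blast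
    thus "\<forall>j<n. \<forall>k\<in>D. cs j k = 0" using inD unfolding a_def indep_def by blast
  qed
  obtain ell where ell: "\<forall>c. (\<exists>k\<in>D. c k \<noteq> 0) \<longrightarrow> (\<Sum>e\<in>E. ell e * qm D \<beta> c e) > 0"
    using core[OF fD fE H] by blast
  define f where "f = (\<lambda>x. \<Sum>e\<in>E. ell e * co x e)"
  have f_add: "\<And>x y. f (x + y) = f x + f y" unfolding f_def by (simp add: co_add distrib_left sum.distrib)
  have f_rs: "\<And>r x. f (rs r x) = r * f x" unfolding f_def by (simp add: co_rs sum_distrib_left algebra_simps)
  have f_J: "\<And>x. x \<in> J \<Longrightarrow> f x = 0" unfolding f_def by (simp add: co_J)
  have f_diff: "\<And>x y. f (x - y) = f x - f y"
  proof -
    fix x y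
    have "f (x - y) + f y = f x" using f_add[of "x - y" y] by simp
    thus "f (x - y) = f x - f y" by simp
  qed
  have f_pos: "\<And>a. a \<notin> I \<Longrightarrow> f (st a * a) > 0"
  proof -
    fix a assume aI: "a \<notin> I"
    define c where "c = coord I D a"
    have ac: "a - lc D c \<in> I" unfolding c_def by (rule coord_in[OF spD])
    have "\<exists>k\<in>D. c k \<noteq> 0"
    proof (rule ccontr)
      assume "\<not> (\<exists>k\<in>D. c k \<noteq> 0)"
      hence "lc D c = 0" by (intro lc_zero) auto
      thus False using ac aI by simp
    qed
    hence "(\<Sum>e\<in>E. ell e * qm D \<beta> c e) > 0" using ell by blast
    hence "f (st (lc D c) * lc D c) > 0" unfolding f_def by (simp add: qmco)
    moreover have "st a * a - st (lc D c) * lc D c \<in> J" unfolding J_def by (rule herm_sq[OF LI ac])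
    ultimately show "f (st a * a) > 0" using f_J f_diff by (metis diff_eq_eq add_0)
  qed
  define g where "g = (\<lambda>x. (f x + f (st x)) / 2)"
  have "\<forall>x y. g (x + y) = g x + g y" unfolding g_def by (simp add: f_add st_add add_divide_distrib)
  moreover have "\<forall>r x. g (rs r x) = r * g x" unfolding g_def by (simp add: f_rs st_rs algebra_simps)
  moreover have "\<forall>x. g (st x) = g x" unfolding g_def by (simp add: st_st add.commute)
  moreover have "\<forall>x\<in>Jset I. g x = 0" unfolding g_def using f_J J_st unfolding J_def by simp
  moreover have "\<forall>a. a \<notin> I \<longrightarrow> g (st a * a) > 0" unfolding g_def using f_pos by (simp add: st_mul st_st)
  ultimately show ?thesis using fD spD inD by blast
qed

lemma forward:
  assumes LI: "left_ideal K sm I" and RI: "real_ideal st I" and FC: "finite_codim K sm I"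
  shows "\<exists>(V :: 'a set) vsm ip p v. star_rep K sm st V vsm ip p \<and> fin_dim K V vsm \<and> v \<in> V \<and>
              I = I_left p v \<and> (\<lambda>a. p a v) ` UNIV = V"
proof -
  obtain D g where fD: "finite D" and spD: "spans I D" and inD: "indep I D"
    and g_add: "\<And>x y. g (x + y) = g x + g y" and g_rs: "\<And>r x. g (rs r x) = r * g x"
    and g_st: "\<And>x. g (st x) = g x" and g_J: "\<And>x. x \<in> Jset I \<Longrightarrow> g x = 0"
    and g_pos: "\<And>a. a \<notin> I \<Longrightarrow> g (st a * a) > 0"
    using pos_functional[OF LI RI FC] by blast
  have rI: "rsub I" by (rule LI_rsub[OF LI])
  have rJ: "rsub (Jset I)" by (rule J_rsub[OF LI])
  have g_diff: "\<And>x y. g (x - y) = g x - g y"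
  proof -
    fix x y
    have "g (x - y) + g y = g x" using g_add[of "x - y" y] by simp
    thus "g (x - y) = g x - g y" by simp
  qed
  have g_neg: "\<And>x. g (- x) = - g x" using g_diff[of 0] g_J[OF rsub0[OF rJ]] by simp
  have g_eqJ: "\<And>x y. x - y \<in> Jset I \<Longrightarrow> g x = g y" using g_diff g_J by fastforce
  have g_nn: "\<And>a. g (st a * a) \<ge> 0"
  proof -
    fix a
    show "g (st a * a) \<ge> 0"
    proof (cases "a \<in> I")
      case True
      hence "st a * a \<in> Jset I" using I_sub_J[OF LI LI_mul[OF LI True]] by simp
      thus ?thesis using g_J by simp
    next
      case False thus ?thesis using g_pos[OF False] by simp
    qed
  qed
  define \<pi> where "\<pi> = (\<lambda>x. lc D (coord I D x))"
  have pi_in: "\<And>x. x - \<pi> x \<in> I" unfolding \<pi>_def by (rule coord_in[OF spD])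
  have pi_in2: "\<And>x. \<pi> x - x \<in> I" using pi_in rsub_neg[OF rI] by (metis minus_diff_eq)
  have pi_eq: "\<And>x y. x - y \<in> I \<Longrightarrow> \<pi> x = \<pi> y"
    unfolding \<pi>_def by (rule lc_cong) (rule coord_eq[OF rI spD inD])
  have pi_add: "\<And>x y. \<pi> (x + y) = \<pi> x + \<pi> y"
  proof -
    fix x y
    have "\<pi> (x + y) = lc D (\<lambda>b. coord I D x b + coord I D y b)"
      unfolding \<pi>_def by (rule lc_cong) (rule coord_add[OF rI spD inD])
    thus "\<pi> (x + y) = \<pi> x + \<pi> y" unfolding \<pi>_def by (simp add: lc_add)
  qed
  have pi_rs: "\<And>r x. \<pi> (rs r x) = rs r (\<pi> x)"
  proof -
    fix r x
    have "\<pi> (rs r x) = lc D (\<lambda>b. r * coord I D x b)"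
      unfolding \<pi>_def by (rule lc_cong) (rule coord_rs[OF rI spD inD])
    thus "\<pi> (rs r x) = rs r (\<pi> x)" unfolding \<pi>_def by (simp add: lc_scale)
  qed
  have pi_I: "\<And>x. x \<in> I \<Longrightarrow> \<pi> x = 0"
  proof -
    fix x assume "x \<in> I"
    hence "\<pi> x = lc D (\<lambda>_. 0)" unfolding \<pi>_def by (intro lc_cong coord_X[OF rI spD inD])
    thus "\<pi> x = 0" using lc_zero[of D "\<lambda>_. 0"] by simp
  qed
  have pi_zero_iff: "\<And>x. \<pi> x = 0 \<longleftrightarrow> x \<in> I"
  proof -
    fix x show "\<pi> x = 0 \<longleftrightarrow> x \<in> I" using pi_I[of x] pi_in[of x] by auto
  qed
  define V where "V = {w. \<exists>c. w = lc D c}"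
  have pi_V: "\<And>x. \<pi> x \<in> V" unfolding V_def \<pi>_def by blast
  have pi_id: "\<And>w. w \<in> V \<Longrightarrow> \<pi> w = w"
  proof -
    fix w assume "w \<in> V"
    then obtain c where c: "w = lc D c" unfolding V_def by blast
    have "w - lc D c \<in> I" using c rsub0[OF rI] by simp
    hence "\<pi> w = lc D c" unfolding \<pi>_def by (intro lc_cong coord_unique[OF rI spD inD])
    thus "\<pi> w = w" using c by simp
  qed
  have pi_sum: "\<And>A f. \<pi> (\<Sum>i\<in>A. f i) = (\<Sum>i\<in>A. \<pi> (f i))"
  proof -
    fix A :: "'b set" and f
    show "\<pi> (\<Sum>i\<in>A. f i) = (\<Sum>i\<in>A. \<pi> (f i))"
      by (induction A rule: infinite_finite_induct) (auto simp: pi_add pi_I rsub0[OF rI])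
  qed
  have pi_mul: "\<And>a w. \<pi> (a * \<pi> w) = \<pi> (a * w)"
  proof -
    fix a w
    have "a * \<pi> w - a * w = a * (\<pi> w - w)" by (simp add: right_diff_distrib)
    also have "\<dots> \<in> I" using LI_mul[OF LI pi_in2] .
    finally show "\<pi> (a * \<pi> w) = \<pi> (a * w)" by (rule pi_eq)
  qed
  have pi_sm: "\<And>c w. c \<in> K \<Longrightarrow> \<pi> (sm c (\<pi> w)) = \<pi> (sm c w)"
  proof -
    fix c w assume c: "c \<in> K"
    have "sm c (\<pi> w) - sm c w = sm c (\<pi> w - w)" using sm_diff[OF c] by simp
    also have "\<dots> \<in> I" using LI_sm[OF LI c pi_in2] .
    finally show "\<pi> (sm c (\<pi> w)) = \<pi> (sm c w)" by (rule pi_eq)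
  qed
  have V0: "0 \<in> V" using pi_V[of 0] pi_I[OF rsub0[OF rI]] by simp
  have Vadd: "\<And>x y. x \<in> V \<Longrightarrow> y \<in> V \<Longrightarrow> x + y \<in> V" using pi_V pi_add pi_id by metis
  have Vneg: "\<And>x. x \<in> V \<Longrightarrow> - x \<in> V" using pi_V pi_rs pi_id rs_minus_one by metis
  define \<phi> where "\<phi> = (\<lambda>z. if K = UNIV then complex_of_real (g z) - \<i> * complex_of_real (g (sm \<i> z))
                          else complex_of_real (g z))"
  have phi_add: "\<And>x y. \<phi> (x + y) = \<phi> x + \<phi> y"
    unfolding \<phi>_def by (auto simp: g_add sm_add algebra_simps)
  have phi_J: "\<And>x y. x - y \<in> Jset I \<Longrightarrow> \<phi> x = \<phi> y"
  proof -
    fix x y assume xy: "x - y \<in> Jset I"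
    show "\<phi> x = \<phi> y"
    proof (cases "K = UNIV")
      case True
      have "sm \<i> x - sm \<i> y = sm \<i> (x - y)" using sm_diff True by simp
      hence "sm \<i> x - sm \<i> y \<in> Jset I" using J_smi[OF True LI xy] by simp
      thus ?thesis using g_eqJ[OF xy] g_eqJ True unfolding \<phi>_def by simp
    next
      case False thus ?thesis using g_eqJ[OF xy] unfolding \<phi>_def by simp
    qed
  qed
  have phi_I: "\<And>x y. x - y \<in> I \<Longrightarrow> \<phi> x = \<phi> y" using phi_J I_sub_J[OF LI] by blast
  have phi_sm: "\<And>c z. c \<in> K \<Longrightarrow> \<phi> (sm c z) = c * \<phi> z"
  proof -
    fix c z assume c: "c \<in> K"
    show "\<phi> (sm c z) = c * \<phi> z"
    proof (cases "K = UNIV")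
      case True
      have phi_rs: "\<And>r z. \<phi> (rs r z) = complex_of_real r * \<phi> z"
      proof -
        fix r z
        have "sm \<i> (rs r z) = rs r (sm \<i> z)" unfolding rs_def using sm_mult True
          by (metis UNIV_I mult.commute)
        thus "\<phi> (rs r z) = complex_of_real r * \<phi> z" unfolding \<phi>_def using True by (simp add: g_rs algebra_simps)
      qed
      have "sm \<i> (sm \<i> z) = - z" using sm_mult[of \<i> \<i> z] True sm_negc[of 1 z] sm_one by simp
      hence phi_i: "\<phi> (sm \<i> z) = \<i> * \<phi> z" unfolding \<phi>_def using True by (simp add: g_neg algebra_simps)
      have "\<phi> (sm c z) = complex_of_real (Re c) * \<phi> z + complex_of_real (Im c) * (\<i> * \<phi> z)"
        using sm_decomp[OF c, of z] phi_add phi_rs phi_i by simp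
      also have "\<dots> = (complex_of_real (Re c) + complex_of_real (Im c) * \<i>) * \<phi> z" by (simp add: algebra_simps)
      also have "complex_of_real (Re c) + complex_of_real (Im c) * \<i> = c" by (simp add: complex_eq_iff)
      finally show ?thesis .
    next
      case False
      hence "c \<in> \<real>" using c Kcases by auto
      hence cr: "c = complex_of_real (Re c)" by (simp add: complex_is_Real_iff complex_eq_iff)
      hence "sm c z = rs (Re c) z" unfolding rs_def by simp
      thus ?thesis unfolding \<phi>_def using False by (subst cr) (simp add: g_rs)
    qed
  qed
  have phi_st: "\<And>z. \<phi> (st z) = cnj (\<phi> z)"
  proof -
    fix z
    show "\<phi> (st z) = cnj (\<phi> z)"
    proof (cases "K = UNIV")
      case True
      have "sm \<i> (st z) = st (sm (- \<i>) z)" using st_sm True by simp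
      also have "\<dots> = st (- sm \<i> z)" using sm_negc True by simp
      finally have "g (sm \<i> (st z)) = - g (sm \<i> z)" by (simp add: st_neg g_st g_neg)
      thus ?thesis unfolding \<phi>_def using True by (simp add: g_st)
    next
      case False thus ?thesis unfolding \<phi>_def by (simp add: g_st)
    qed
  qed
  have phi_herm: "\<And>x. \<phi> (st x * x) = complex_of_real (g (st x * x))"
  proof -
    fix x
    show "\<phi> (st x * x) = complex_of_real (g (st x * x))"
    proof (cases "K = UNIV")
      case True
      define h where "h = st x * x"
      have hh: "st h = h" unfolding h_def by (simp add: st_mul st_st)
      have "sm \<i> h = st (sm (- \<i>) h)" using st_sm True hh by simp
      also have "\<dots> = st (- sm \<i> h)" using sm_negc True by simp
      finally have "g (sm \<i> h) = - g (sm \<i> h)" by (metis g_st g_neg)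
      hence "g (sm \<i> h) = 0" by simp
      thus ?thesis unfolding \<phi>_def h_def using True by simp
    next
      case False thus ?thesis unfolding \<phi>_def by simp
    qed
  qed
  define vsm where "vsm = (\<lambda>c w. \<pi> (sm c w))"
  define p where "p = (\<lambda>a w. \<pi> (a * w))"
  define ip where "ip = (\<lambda>x y. \<phi> (st y * x))"
  define v where "v = \<pi> 1"
  have ph: "pre_hilbert K V vsm ip" unfolding pre_hilbert_def
  proof (intro conjI ballI allI impI)
    show "0 \<in> V" by (rule V0)
    show "\<And>x y. x \<in> V \<Longrightarrow> y \<in> V \<Longrightarrow> x + y \<in> V" by (rule Vadd)
    show "\<And>x. x \<in> V \<Longrightarrow> - x \<in> V" by (rule Vneg)
    show "\<And>c x. vsm c x \<in> V" unfolding vsm_def by (rule pi_V)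
    show "\<And>c x y. c \<in> K \<Longrightarrow> vsm c (x + y) = vsm c x + vsm c y" unfolding vsm_def by (simp add: sm_add pi_add)
    show "\<And>c d x. c \<in> K \<Longrightarrow> d \<in> K \<Longrightarrow> vsm (c + d) x = vsm c x + vsm d x" unfolding vsm_def by (simp add: sm_addc pi_add)
    show "\<And>c d x. c \<in> K \<Longrightarrow> d \<in> K \<Longrightarrow> vsm (c * d) x = vsm c (vsm d x)" unfolding vsm_def by (simp add: sm_mult pi_sm)
    show "\<And>x. x \<in> V \<Longrightarrow> vsm 1 x = x" unfolding vsm_def by (simp add: sm_one pi_id)
    show "\<And>x y. ip x y \<in> K" unfolding ip_def \<phi>_def using Kcases by auto
    show "\<And>x y z. ip (x + y) z = ip x z + ip y z" unfolding ip_def by (simp add: distrib_left phi_add)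
    show "\<And>c x y. c \<in> K \<Longrightarrow> ip (vsm c x) y = c * ip x y"
    proof -
      fix c x y assume c: "c \<in> K"
      have "st y * \<pi> (sm c x) - st y * sm c x = st y * (\<pi> (sm c x) - sm c x)" by (simp add: right_diff_distrib)
      also have "\<dots> \<in> I" by (rule LI_mul[OF LI pi_in2])
      finally have "\<phi> (st y * \<pi> (sm c x)) = \<phi> (st y * sm c x)" by (rule phi_I)
      also have "st y * sm c x = sm c (st y * x)" using sm_mul_right[OF c] by simp
      finally show "ip (vsm c x) y = c * ip x y" unfolding ip_def vsm_def using phi_sm[OF c] by simp
    qed
    show "\<And>x y. ip y x = cnj (ip x y)" unfolding ip_def by (metis phi_st st_mul st_st)
    show "\<And>x. Im (ip x x) = 0" unfolding ip_def using phi_herm by simp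
    show "\<And>x. 0 \<le> Re (ip x x)" unfolding ip_def using phi_herm g_nn by simp
    show "\<And>x. x \<in> V \<Longrightarrow> ip x x = 0 \<Longrightarrow> x = 0"
    proof -
      fix x assume xV: "x \<in> V" and "ip x x = 0"
      hence "g (st x * x) = 0" unfolding ip_def using phi_herm by simp
      hence "x \<in> I" using g_pos by fastforce
      thus "x = 0" using pi_I pi_id[OF xV] by simp
    qed
  qed
  have sr: "star_rep K sm st V vsm ip p" unfolding star_rep_def
  proof (intro conjI ballI allI impI)
    show "pre_hilbert K V vsm ip" by (rule ph)
    show "\<And>a x. p a x \<in> V" unfolding p_def by (rule pi_V)
    show "\<And>a x y. p a (x + y) = p a x + p a y" unfolding p_def by (simp add: distrib_left pi_add)
    show "\<And>a c x. c \<in> K \<Longrightarrow> p a (vsm c x) = vsm c (p a x)"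
      unfolding p_def vsm_def by (simp add: pi_mul pi_sm sm_mul_right)
    show "\<And>x. x \<in> V \<Longrightarrow> p 1 x = x" unfolding p_def by (simp add: pi_id)
    show "\<And>a b x. p (a + b) x = p a x + p b x" unfolding p_def by (simp add: distrib_right pi_add)
    show "\<And>a c x. c \<in> K \<Longrightarrow> p (sm c a) x = vsm c (p a x)"
      unfolding p_def vsm_def by (simp add: pi_sm sm_mul_left)
    show "\<And>a b x. p (a * b) x = p a (p b x)" unfolding p_def by (simp add: pi_mul mult.assoc)
    show "\<And>a x y. ip (p a x) y = ip x (p (st a) y)"
    proof -
      fix a x y
      have "st y * \<pi> (a * x) - st y * (a * x) = st y * (\<pi> (a * x) - a * x)" by (simp add: right_diff_distrib)
      also have "\<dots> \<in> I" by (rule LI_mul[OF LI pi_in2])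
      finally have l: "\<phi> (st y * \<pi> (a * x)) = \<phi> (st y * (a * x))" by (rule phi_I)
      have "st (\<pi> (st a * y)) * x - st (st a * y) * x = st (\<pi> (st a * y) - st a * y) * x"
        by (simp add: st_diff left_diff_distrib)
      also have "\<dots> \<in> Jset I" by (rule stI_mul_J[OF LI pi_in2])
      finally have r: "\<phi> (st (\<pi> (st a * y)) * x) = \<phi> (st (st a * y) * x)" by (rule phi_J)
      have "st (st a * y) * x = st y * (a * x)" by (simp add: st_mul st_st mult.assoc)
      thus "ip (p a x) y = ip x (p (st a) y)" unfolding ip_def p_def using l r by simp
    qed
  qed
  have fd: "fin_dim K V vsm" unfolding fin_dim_def
  proof (intro exI conjI)
    show "finite D" by (rule fD)
    show "D \<subseteq> V"
    proof
      fix d assume d: "d \<in> D"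
      have "lc D (\<lambda>b. if b = d then 1 else 0) = d" using lc_delta[OF fD d] rs_one by simp
      hence "d = lc D (\<lambda>b. if b = d then 1 else 0)" by simp
      thus "d \<in> V" unfolding V_def by (intro CollectI exI)
    qed
    show "\<forall>x\<in>V. \<exists>c. (\<forall>s\<in>D. c s \<in> K) \<and> x = (\<Sum>s\<in>D. vsm (c s) s)"
    proof
      fix x assume "x \<in> V"
      then obtain r where r: "x = lc D r" unfolding V_def by blast
      have "(\<Sum>s\<in>D. vsm (complex_of_real (r s)) s) = \<pi> (lc D r)"
        unfolding vsm_def lc_def rs_def by (simp add: pi_sum)
      also have "\<dots> = x" using pi_id[OF \<open>x \<in> V\<close>] r by simp
      finally have eqx: "x = (\<Sum>s\<in>D. vsm (complex_of_real (r s)) s)" by simp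
      show "\<exists>c. (\<forall>s\<in>D. c s \<in> K) \<and> x = (\<Sum>s\<in>D. vsm (c s) s)"
        by (rule exI[of _ "\<lambda>s. complex_of_real (r s)"]) (use eqx of_real_K in blast)
    qed
  qed
  have pv: "\<And>a. p a v = \<pi> a" unfolding p_def v_def using pi_mul[of _ 1] by simp
  have "v \<in> V" unfolding v_def by (rule pi_V)
  moreover have "I = I_left p v" unfolding I_left_def pv using pi_zero_iff by blast
  moreover have "(\<lambda>a. p a v) ` UNIV = V" unfolding pv
  proof
    show "range \<pi> \<subseteq> V" using pi_V by blast
    show "V \<subseteq> range \<pi>"
    proof
      fix w assume "w \<in> V"
      hence "w = \<pi> w" using pi_id by simp
      thus "w \<in> range \<pi>" by blast
    qed
  qed
  ultimately show ?thesis using sr fd by blast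
qed

end

lemma rep_ph: "star_rep K sm st V vsm ip p \<Longrightarrow> pre_hilbert K V vsm ip" unfolding star_rep_def by blast
lemma rep_V0: assumes "star_rep K sm st V vsm ip p" shows "0 \<in> V"
  using rep_ph[OF assms] unfolding pre_hilbert_def by (elim conjE) assumption
lemma rep_VaddA: assumes "star_rep K sm st V vsm ip p" shows "\<forall>x\<in>V. \<forall>y\<in>V. x + y \<in> V"
  using rep_ph[OF assms] unfolding pre_hilbert_def by (elim conjE) assumption
lemma rep_Vadd: "star_rep K sm st V vsm ip p \<Longrightarrow> x \<in> V \<Longrightarrow> y \<in> V \<Longrightarrow> x + y \<in> V"
  using rep_VaddA[of K sm st V vsm ip p] by blast
lemma rep_paddA: assumes "star_rep K sm st V vsm ip p" shows "\<forall>a b. \<forall>x\<in>V. p (a + b) x = p a x + p b x"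
  using assms unfolding star_rep_def by (elim conjE) assumption
lemma rep_padd: "star_rep K sm st V vsm ip p \<Longrightarrow> x \<in> V \<Longrightarrow> p (a + b) x = p a x + p b x"
  using rep_paddA[of K sm st V vsm ip p] by blast
lemma rep_p0: "star_rep K sm st V vsm ip p \<Longrightarrow> x \<in> V \<Longrightarrow> p 0 x = 0"
  using rep_padd[of K sm st V vsm ip p x 0 0] by simp
lemma rep_pdiff: "star_rep K sm st V vsm ip p \<Longrightarrow> x \<in> V \<Longrightarrow> p (a - b) x = p a x - p b x"
  using rep_padd[of K sm st V vsm ip p x "a - b" b] by (simp add: algebra_simps)
lemma rep_psum: "star_rep K sm st V vsm ip p \<Longrightarrow> x \<in> V \<Longrightarrow> p (\<Sum>i\<in>A. f i) x = (\<Sum>i\<in>A. p (f i) x)"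
  by (induction A rule: infinite_finite_induct) (auto simp: rep_p0 rep_padd)
lemma rep_Vsum: "star_rep K sm st V vsm ip p \<Longrightarrow> (\<And>i. i \<in> A \<Longrightarrow> f i \<in> V) \<Longrightarrow> (\<Sum>i\<in>A. f i) \<in> V"
  by (induction A rule: infinite_finite_induct) (auto simp: rep_V0 rep_Vadd)
lemma rep_ipaddA: assumes "star_rep K sm st V vsm ip p" shows "\<forall>x\<in>V. \<forall>y\<in>V. \<forall>z\<in>V. ip (x + y) z = ip x z + ip y z"
  using rep_ph[OF assms] unfolding pre_hilbert_def by (elim conjE) assumption
lemma rep_ipadd: "star_rep K sm st V vsm ip p \<Longrightarrow> x \<in> V \<Longrightarrow> y \<in> V \<Longrightarrow> z \<in> V \<Longrightarrow> ip (x + y) z = ip x z + ip y z"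
  using rep_ipaddA[of K sm st V vsm ip p] by blast
lemma rep_ip0l: "star_rep K sm st V vsm ip p \<Longrightarrow> y \<in> V \<Longrightarrow> ip 0 y = 0"
proof -
  assume sr: "star_rep K sm st V vsm ip p" and y: "y \<in> V"
  have "ip (0 + 0) y = ip 0 y + ip 0 y" using rep_ipadd[OF sr rep_V0[OF sr] rep_V0[OF sr] y] .
  thus ?thesis by simp
qed
lemma rep_ip0r:
  assumes "star_rep K sm st V vsm ip p" "x \<in> V" shows "ip x 0 = 0"
proof -
  have "\<forall>x\<in>V. \<forall>y\<in>V. ip y x = cnj (ip x y)" using rep_ph[OF assms(1)] unfolding pre_hilbert_def by (elim conjE) assumption
  hence "ip x 0 = cnj (ip 0 x)" using rep_V0[OF assms(1)] assms(2) by blast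
  thus ?thesis using rep_ip0l[OF assms] by simp
qed
lemma rep_ipsum:
  assumes sr: "star_rep K sm st V vsm ip p" and yV: "y \<in> V"
  shows "(\<And>i. i \<in> A \<Longrightarrow> f i \<in> V) \<Longrightarrow> ip (\<Sum>i\<in>A. f i) y = (\<Sum>i\<in>A. ip (f i) y)"
proof (induction A rule: infinite_finite_induct)
  case (infinite A) thus ?case using rep_ip0l[OF sr yV] by simp
next
  case empty thus ?case using rep_ip0l[OF sr yV] by simp
next
  case (insert i A)
  have "ip (\<Sum>i\<in>insert i A. f i) y = ip (f i + (\<Sum>i\<in>A. f i)) y" using insert.hyps by simp
  also have "\<dots> = ip (f i) y + ip (\<Sum>i\<in>A. f i) y"
  proof (rule rep_ipadd[OF sr])
    show "f i \<in> V" using insert.prems by simp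
    show "(\<Sum>i\<in>A. f i) \<in> V" using insert.prems by (intro rep_Vsum[OF sr]) simp
    show "y \<in> V" by (rule yV)
  qed
  finally show ?case using insert by simp
qed

context sa begin
lemma backward:
  fixes V :: "'v::ab_group_add set" and vsm :: "complex \<Rightarrow> 'v \<Rightarrow> 'v" and ip :: "'v \<Rightarrow> 'v \<Rightarrow> complex" and p :: "'a \<Rightarrow> 'v \<Rightarrow> 'v"
  assumes sr: "star_rep K sm st V vsm ip p" and fd: "fin_dim K V vsm" and v: "v \<in> V"
    and IL: "I = I_left p v" and rg: "(\<lambda>a. p a v) ` UNIV = V"
  shows "real_ideal st I \<and> finite_codim K sm I"
proof -
  have ph: "pre_hilbert K V vsm ip" using sr unfolding star_rep_def by blast
  note PH = ph[unfolded pre_hilbert_def]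
  note SR = sr[unfolded star_rep_def]
  have V0: "0 \<in> V" using PH by (elim conjE) assumption
  have VaddA: "\<forall>x\<in>V. \<forall>y\<in>V. x + y \<in> V" using PH by (elim conjE) assumption
  have Vadd: "\<And>x y. x \<in> V \<Longrightarrow> y \<in> V \<Longrightarrow> x + y \<in> V" by (rule VaddA[rule_format])
  have ip_addA: "\<forall>x\<in>V. \<forall>y\<in>V. \<forall>z\<in>V. ip (x + y) z = ip x z + ip y z" using PH by (elim conjE) assumption
  have ip_add: "\<And>x y z. x \<in> V \<Longrightarrow> y \<in> V \<Longrightarrow> z \<in> V \<Longrightarrow> ip (x + y) z = ip x z + ip y z"
    by (rule ip_addA[rule_format])
  have ip_cnjA: "\<forall>x\<in>V. \<forall>y\<in>V. ip y x = cnj (ip x y)" using PH by (elim conjE) assumption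
  have ip_cnj: "\<And>x y. x \<in> V \<Longrightarrow> y \<in> V \<Longrightarrow> ip y x = cnj (ip x y)"
    by (rule ip_cnjA[rule_format])
  have ip_posA: "\<forall>x\<in>V. Im (ip x x) = 0 \<and> Re (ip x x) \<ge> 0" using PH by (elim conjE) assumption
  have ip_pos: "\<And>x. x \<in> V \<Longrightarrow> Im (ip x x) = 0 \<and> Re (ip x x) \<ge> 0" by (rule ip_posA[rule_format])
  have ip_def0A: "\<forall>x\<in>V. ip x x = 0 \<longrightarrow> x = 0" using PH by (elim conjE) assumption
  have ip_def0: "\<And>x. x \<in> V \<Longrightarrow> ip x x = 0 \<Longrightarrow> x = 0" by (rule ip_def0A[rule_format])
  have pVA: "\<forall>a. \<forall>x\<in>V. p a x \<in> V" using SR by (elim conjE) assumption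
  have pV: "\<And>a x. x \<in> V \<Longrightarrow> p a x \<in> V" by (rule pVA[rule_format])
  have p_addAA: "\<forall>a b. \<forall>x\<in>V. p (a + b) x = p a x + p b x" using SR by (elim conjE) assumption
  have p_addA: "\<And>a b x. x \<in> V \<Longrightarrow> p (a + b) x = p a x + p b x" by (rule p_addAA[rule_format])
  have p_smA: "\<forall>a. \<forall>c\<in>K. \<forall>x\<in>V. p (sm c a) x = vsm c (p a x)" using SR by (elim conjE) assumption
  have p_sm: "\<And>a c x. c \<in> K \<Longrightarrow> x \<in> V \<Longrightarrow> p (sm c a) x = vsm c (p a x)" by (rule p_smA[rule_format])
  have p_mulA: "\<forall>a b. \<forall>x\<in>V. p (a * b) x = p a (p b x)" using SR by (elim conjE) assumption
  have p_mul: "\<And>a b x. x \<in> V \<Longrightarrow> p (a * b) x = p a (p b x)" by (rule p_mulA[rule_format])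
  have p_adjA: "\<forall>a. \<forall>x\<in>V. \<forall>y\<in>V. ip (p a x) y = ip x (p (st a) y)" using SR by (elim conjE) assumption
  have p_adj: "\<And>a x y. x \<in> V \<Longrightarrow> y \<in> V \<Longrightarrow> ip (p a x) y = ip x (p (st a) y)" by (rule p_adjA[rule_format])
  have p_zeroA: "\<And>x. x \<in> V \<Longrightarrow> p 0 x = 0" by (rule rep_p0[OF sr])
  have p_diffA: "\<And>a b x. x \<in> V \<Longrightarrow> p (a - b) x = p a x - p b x" by (rule rep_pdiff[OF sr])
  have ip_zero_r: "\<And>x. x \<in> V \<Longrightarrow> ip x 0 = 0" by (rule rep_ip0r[OF sr])
  have RI: "real_ideal st I" unfolding real_ideal_def
  proof (rule allI, rule allI, rule impI)
    fix n :: nat and a :: "nat \<Rightarrow> 'a"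
    assume "(\<Sum>j<n. st (a j) * a j) \<in> {x + st y |x y. x \<in> I \<and> y \<in> I}"
    then obtain x y where xy: "(\<Sum>j<n. st (a j) * a j) = x + st y" "x \<in> I" "y \<in> I" by blast
    define w where "w = (\<lambda>j. p (a j) v)"
    have wV: "\<And>j. w j \<in> V" unfolding w_def using pV v by blast
    have "ip (p (\<Sum>j<n. st (a j) * a j) v) v = (\<Sum>j<n. ip (w j) (w j))"
    proof -
      have "p (\<Sum>j<n. st (a j) * a j) v = (\<Sum>j<n. p (st (a j) * a j) v)"
        by (rule rep_psum[OF sr v])
      also have "\<dots> = (\<Sum>j<n. p (st (a j)) (w j))"
        unfolding w_def by (rule sum.cong[OF refl], rule p_mul[OF v])
      finally have "p (\<Sum>j<n. st (a j) * a j) v = (\<Sum>j<n. p (st (a j)) (w j))" .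
      hence "ip (p (\<Sum>j<n. st (a j) * a j) v) v = ip (\<Sum>j<n. p (st (a j)) (w j)) v" by simp
      also have "\<dots> = (\<Sum>j<n. ip (p (st (a j)) (w j)) v)"
        by (rule rep_ipsum[OF sr v]) (rule pV[OF wV])
      also have "\<dots> = (\<Sum>j<n. ip (w j) (w j))"
        unfolding w_def by (rule sum.cong[OF refl]) (simp add: p_adj[OF pV[OF v] v] st_st)
      finally show ?thesis .
    qed
    moreover have "ip (p (\<Sum>j<n. st (a j) * a j) v) v = 0"
    proof -
      have px: "p x v = 0" "p y v = 0" using xy IL unfolding I_left_def by auto
      have "p (x + st y) v = p (st y) v" using p_addA[OF v] px by simp
      hence "ip (p (x + st y) v) v = ip v (p y v)" using p_adj[OF v v] st_st by simp
      thus ?thesis using xy(1) px ip_zero_r[OF v] by simp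
    qed
    ultimately have s0: "(\<Sum>j<n. ip (w j) (w j)) = 0" by simp
    hence "Re (\<Sum>j<n. ip (w j) (w j)) = 0" by simp
    hence "(\<Sum>j<n. Re (ip (w j) (w j))) = 0" by (simp only: Re_sum)
    hence "\<forall>j\<in>{..<n}. Re (ip (w j) (w j)) = 0"
      using sum_nonneg_eq_0_iff[of "{..<n}" "\<lambda>j. Re (ip (w j) (w j))"] ip_pos wV by simp
    hence "\<forall>j<n. ip (w j) (w j) = 0" using ip_pos wV by (simp add: complex_eq_iff)
    hence "\<forall>j<n. w j = 0" using ip_def0 wV by blast
    thus "\<forall>j<n. a j \<in> I" using IL unfolding I_left_def w_def by simp
  qed
  obtain S where fS: "finite S" and SV: "S \<subseteq> V" and Ssp: "\<forall>x\<in>V. \<exists>c. (\<forall>s\<in>S. c s \<in> K) \<and> x = (\<Sum>s\<in>S. vsm (c s) s)"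
    using fd unfolding fin_dim_def by blast
  define b where "b = (\<lambda>s. SOME a. p a v = s)"
  have pb: "\<And>s. s \<in> S \<Longrightarrow> p (b s) v = s"
  proof -
    fix s assume "s \<in> S"
    hence "s \<in> range (\<lambda>a. p a v)" using SV rg by blast
    then obtain a where "p a v = s" by blast
    thus "p (b s) v = s" unfolding b_def by (rule someI)
  qed
  have injb: "inj_on b S" by (rule inj_onI) (metis pb)
  have FC: "finite_codim K sm I" unfolding finite_codim_def
  proof (rule exI[of _ "b ` S"], intro conjI allI)
    show "finite (b ` S)" using fS by simp
    fix a
    obtain c where c: "\<forall>s\<in>S. c s \<in> K" "p a v = (\<Sum>s\<in>S. vsm (c s) s)" using Ssp pV[OF v] by blast
    define c' where "c' = (\<lambda>t. c (p t v))"
    have "(\<Sum>t\<in>b ` S. sm (c' t) t) = (\<Sum>s\<in>S. sm (c' (b s)) (b s))" by (simp add: sum.reindex[OF injb])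
    also have "\<dots> = (\<Sum>s\<in>S. sm (c s) (b s))" unfolding c'_def by (rule sum.cong) (auto simp: pb)
    finally have e: "(\<Sum>t\<in>b ` S. sm (c' t) t) = (\<Sum>s\<in>S. sm (c s) (b s))" .
    have "p (\<Sum>s\<in>S. sm (c s) (b s)) v = (\<Sum>s\<in>S. vsm (c s) s)"
      unfolding rep_psum[OF sr v] using p_sm[OF _ v] c(1) pb by (auto intro!: sum.cong)
    hence "p (a - (\<Sum>t\<in>b ` S. sm (c' t) t)) v = 0" using e c(2) p_diffA[OF v] by simp
    hence "(\<forall>s\<in>b ` S. c' s \<in> K) \<and> a - (\<Sum>s\<in>b ` S. sm (c' s) s) \<in> I"
      using IL unfolding I_left_def c'_def using c(1) pb by auto
    thus "\<exists>c. (\<forall>s\<in>b ` S. c s \<in> K) \<and> a - (\<Sum>s\<in>b ` S. sm (c s) s) \<in> I" by blast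
  qed
  show ?thesis using RI FC by blast
qed

end

lemma part3:
  assumes sr: "star_rep K sm st V vsm ip p" and v: "v \<in> V" and rg: "(\<lambda>a. p a v) ` UNIV = V"
    and J: "two_sided_ideal K sm J" and JI: "J \<subseteq> I_left p v"
  shows "J \<subseteq> ker_rep V p"
proof
  fix a assume a: "a \<in> J"
  show "a \<in> ker_rep V p" unfolding ker_rep_def
  proof (intro CollectI ballI)
    fix x assume "x \<in> V"
    then obtain b where b: "x = p b v" using rg by blast
    have "p a x = p (a * b) v" using sr v unfolding b star_rep_def by simp
    also have "a * b \<in> J" using J a unfolding two_sided_ideal_def by blast
    hence "p (a * b) v = 0" using JI unfolding I_left_def by blast
    finally show "p a x = 0" .
  qed
qed

lemma part4:
  assumes sr: "star_rep K sm st V vsm ip p" and v: "v \<in> V" and rg: "(\<lambda>a. p a v) ` UNIV = V"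
    and J: "two_sided_ideal K sm (I_left p v)"
  shows "ker_rep V p = I_left p v"
proof
  show "I_left p v \<subseteq> ker_rep V p" using part3[OF sr v rg J] by blast
  show "ker_rep V p \<subseteq> I_left p v" using v unfolding ker_rep_def I_left_def by blast
qed


theorem lemma5p1:
  fixes K :: "complex set" and sm :: "complex \<Rightarrow> 'a::ring_1 \<Rightarrow> 'a" and st :: "'a \<Rightarrow> 'a"
    and I :: "'a set"
  assumes "star_algebra K sm st" and "left_ideal K sm I"
  shows "(real_ideal st I \<and> finite_codim K sm I \<longleftrightarrow>
           (\<exists>(V :: 'a set) vsm ip p v. star_rep K sm st V vsm ip p \<and> fin_dim K V vsm \<and> v \<in> V \<and>
              I = I_left p v \<and> (\<lambda>a. p a v) ` UNIV = V))
       \<and> (\<forall>(V :: 'v::ab_group_add set) vsm ip p v. star_rep K sm st V vsm ip p \<and> fin_dim K V vsm \<and>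
              v \<in> V \<and> I = I_left p v \<and> (\<lambda>a. p a v) ` UNIV = V
            \<longrightarrow> real_ideal st I \<and> finite_codim K sm I)
       \<and> (\<forall>(V :: 'v set) vsm ip p v J. star_rep K sm st V vsm ip p \<and> v \<in> V \<and>
              (\<lambda>a. p a v) ` UNIV = V \<and> two_sided_ideal K sm J \<and> J \<subseteq> I_left p v
            \<longrightarrow> J \<subseteq> ker_rep V p)
       \<and> (\<forall>(V :: 'v set) vsm ip p v. star_rep K sm st V vsm ip p \<and> v \<in> V \<and>
              (\<lambda>a. p a v) ` UNIV = V \<and> two_sided_ideal K sm (I_left p v)
            \<longrightarrow> ker_rep V p = I_left p v)"
proof -
  interpret sa K sm st by unfold_locales (rule assms(1))
  have P1: "real_ideal st I \<and> finite_codim K sm I \<longleftrightarrow>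
           (\<exists>(V :: 'a set) vsm ip p v. star_rep K sm st V vsm ip p \<and> fin_dim K V vsm \<and> v \<in> V \<and>
              I = I_left p v \<and> (\<lambda>a. p a v) ` UNIV = V)"
  proof
    assume "real_ideal st I \<and> finite_codim K sm I"
    thus "\<exists>(V :: 'a set) vsm ip p v. star_rep K sm st V vsm ip p \<and> fin_dim K V vsm \<and> v \<in> V \<and>
              I = I_left p v \<and> (\<lambda>a. p a v) ` UNIV = V"
      using forward[OF assms(2)] by blast
  next
    assume "\<exists>(V :: 'a set) vsm ip p v. star_rep K sm st V vsm ip p \<and> fin_dim K V vsm \<and> v \<in> V \<and>
              I = I_left p v \<and> (\<lambda>a. p a v) ` UNIV = V"
    then obtain V :: "'a set" and vsm ip p v where h: "star_rep K sm st V vsm ip p" "fin_dim K V vsm" "v \<in> V"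
      "I = I_left p v" "(\<lambda>a. p a v) ` UNIV = V" by blast
    show "real_ideal st I \<and> finite_codim K sm I" by (rule backward[OF h])
  qed
  have P2: "\<forall>(V :: 'v::ab_group_add set) vsm ip p v. star_rep K sm st V vsm ip p \<and> fin_dim K V vsm \<and>
              v \<in> V \<and> I = I_left p v \<and> (\<lambda>a. p a v) ` UNIV = V
            \<longrightarrow> real_ideal st I \<and> finite_codim K sm I"
  proof (intro allI impI)
    fix V :: "'v set" and vsm ip p v
    assume "star_rep K sm st V vsm ip p \<and> fin_dim K V vsm \<and> v \<in> V \<and> I = I_left p v \<and> (\<lambda>a. p a v) ` UNIV = V"
    thus "real_ideal st I \<and> finite_codim K sm I" using backward by blast
  qed
  have P3: "\<forall>(V :: 'v set) vsm ip p v J. star_rep K sm st V vsm ip p \<and> v \<in> V \<and>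
              (\<lambda>a. p a v) ` UNIV = V \<and> two_sided_ideal K sm J \<and> J \<subseteq> I_left p v
            \<longrightarrow> J \<subseteq> ker_rep V p"
    using part3 by blast
  have P4: "\<forall>(V :: 'v set) vsm ip p v. star_rep K sm st V vsm ip p \<and> v \<in> V \<and>
              (\<lambda>a. p a v) ` UNIV = V \<and> two_sided_ideal K sm (I_left p v)
            \<longrightarrow> ker_rep V p = I_left p v"
    using part4 by blast
  show ?thesis using P1 P2 P3 P4 by blast
qed

end
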